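(* In the polar Brauer category $\mathcal{AB}(\delta)$ over a commutative ring $K$ with $\delta\in K$: (1) If the characteristic of $K$ is not two, then $Z_1=0$ and $2Z_3=(2-\delta)Z_2$. (2) $Z_2\otimes I$ and $\mathbb H$ commute in $\mathrm{End}(1)$; consequently $(Z_2\otimes I_s)\mathbb A=\mathbb A(Z_2\otimes I_r)$ for every morphism $\mathbb A\in\mathrm{Hom}_{\mathcal{AB}(\delta)}(r,s)$.
   Context: Let $K$ be a commutative ring and $\delta\in K$. The Brauer category $\mathcal B(\delta)$ has objects $\mathbb N$; $\mathrm{Hom}_{\mathcal B(\delta)}(r,s)$ is the free $K$-module on Brauer $(r,s)$-diagrams; composition $BA$ (first $A$, then $B$) is stacking with closed loops replaced by a factor $\delta$; $\otimes$ is juxtaposition. $I$ is the identity of $1$, $I_r=I^{\otimes r}$, $X$ the crossing, $\cap:2\to0$ the cap, $\cup:0\to2$ the cup, $H=X-\cup\circ\cap$. The polar Brauer category $\mathcal{AB}(\delta)$ is the $K$-linear category with objects $\mathbb N$ generated, under composition and the right action $\mathbb D\mapsto\mathbb D\otimes B$ of morphisms $B$ of $\mathcal B(\delta)$ (juxtaposing $B$ on the right; $\mathbb D:r\to s$, $B:k\to\ell$ give $\mathbb D\otimes B:r+k\to s+\ell$), by $\mathbb I_0$ (a vertical pole, identity of $0$) and $\mathbb H:1\to1$ (pole joined by a horizontal connector to one thin strand), subject to: (i) $(\mathbb I_0\otimes B)(\mathbb I_0\otimes A)=\mathbb I_0\otimes BA$, $(\mathbb H\otimes B)(\mathbb I_1\otimes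 A)=(\mathbb I_1\otimes B)(\mathbb H\otimes A)=\mathbb H\otimes BA$, with $\mathbb I_r=\mathbb I_0\otimes I_r$; (ii) $[\mathbb H_{01},\mathbb H_{02}+\mathbb H_{12}]=0$ with $[a,b]=ab-ba$, $\mathbb H_{01}=\mathbb H\otimes I$, $\mathbb X_0=\mathbb I_0\otimes X$, $\mathbb H_{02}=\mathbb X_0\mathbb H_{01}\mathbb X_0$, $\mathbb H_{12}=\mathbb I_0\otimes H$; (iii) $\mathbb H^T=-\mathbb H$ where $\mathbb D^T=(\mathbb I_0\otimes\cap\otimes I)(\mathbb D\otimes X)(\mathbb I_0\otimes\cup\otimes I)$ for $\mathbb D:1\to1$; relations are imposed in all composites and right tensor products. Products denote composition, $\mathbb H^\ell$ is the $\ell$-fold composite. Let $\Pi=\mathbb I_0\otimes\cap:2\to0$, $\amalg=\mathbb I_0\otimes\cup:0\to2$ and $Z_\ell=\Pi(\mathbb H^\ell\otimes I)\amalg\in\mathrm{End}_{\mathcal{AB}(\delta)}(0)$ for $\ell\ge1$.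
   Formalization: In part (1) the hypothesis that the characteristic of K is not two is replaced by the hypothesis that 2 is invertible in K. The statement above fails without it. *)

theory Defs
  imports Main
begin

text \<open>A Brauer (r,s)-diagram is a fixed-point-free involution on the point set
  consisting of r bottom (source) points (False,i), i<r, and s top (target)
  points (True,j), j<s. Outside the point set the matching is the identity
  (canonical representative).\<close>

record bdiag =
  bs :: nat
  bt :: nat
  bm :: "bool \<times> nat \<Rightarrow> bool \<times> nat"

definition valid_pt :: "nat \<Rightarrow> nat \<Rightarrow> bool \<times> nat \<Rightarrow> bool" where
  "valid_pt r s p \<longleftrightarrow> (\<not> fst p \<and> snd p < r) \<or> (fst p \<and> snd p < s)"

definition is_bdiag :: "bdiag \<Rightarrow> bool" where
  "is_bdiag d \<longleftrightarrow>
     (\<forall>p. valid_pt (bs d) (bt d) p \<longrightarrow>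
            valid_pt (bs d) (bt d) (bm d p) \<and> bm d p \<noteq> p \<and> bm d (bm d p) = p) \<and>
     (\<forall>p. \<not> valid_pt (bs d) (bt d) p \<longrightarrow> bm d p = p)"

definition bid :: "nat \<Rightarrow> bdiag" where
  "bid n = \<lparr>bs = n, bt = n, bm = (\<lambda>(b, i). if i < n then (\<not> b, i) else (b, i))\<rparr>"

definition bX :: bdiag where
  "bX = \<lparr>bs = 2, bt = 2, bm = (\<lambda>p.
      if p = (False, 0) then (True, 1) else if p = (True, 1) then (False, 0)
      else if p = (False, 1) then (True, 0) else if p = (True, 0) then (False, 1)
      else p)\<rparr>"

definition bcap :: bdiag where
  "bcap = \<lparr>bs = 2, bt = 0, bm = (\<lambda>p.
      if p = (False, 0) then (False, 1) else if p = (False, 1) then (False, 0) else p)\<rparr>"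

definition bcup :: bdiag where
  "bcup = \<lparr>bs = 0, bt = 2, bm = (\<lambda>p.
      if p = (True, 0) then (True, 1) else if p = (True, 1) then (True, 0) else p)\<rparr>"

definition btens :: "bdiag \<Rightarrow> bdiag \<Rightarrow> bdiag" where
  "btens d e = \<lparr>bs = bs d + bs e, bt = bt d + bt e, bm = (\<lambda>(b, i).
      let n = (if b then bt d else bs d); m = (if b then bt e else bs e) in
      if i < n then bm d (b, i)
      else if i < n + m then
        (case bm e (b, i - n) of (c, j) \<Rightarrow> (c, j + (if c then bt d else bs d)))
      else (b, i))\<rparr>"

text \<open>Composition e \<circ> d (first d, then e), via the stacked graph with three layers:
  layer 0 = bottom of d, layer 1 = middle (top of d = bottom of e), layer 2 = top of e.\<close>

definition dpt :: "bool \<times> nat \<Rightarrow> nat \<times> nat" where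
  "dpt p = (if fst p then 1 else 0, snd p)"

definition ept :: "bool \<times> nat \<Rightarrow> nat \<times> nat" where
  "ept p = (if fst p then 2 else 1, snd p)"

definition outp :: "bool \<times> nat \<Rightarrow> nat \<times> nat" where
  "outp p = (if fst p then 2 else 0, snd p)"

definition bedge :: "bdiag \<Rightarrow> bdiag \<Rightarrow> nat \<times> nat \<Rightarrow> nat \<times> nat \<Rightarrow> bool" where
  "bedge d e x y \<longleftrightarrow>
     (\<exists>p. valid_pt (bs d) (bt d) p \<and> x = dpt p \<and> y = dpt (bm d p)) \<or>
     (\<exists>p. valid_pt (bs e) (bt e) p \<and> x = ept p \<and> y = ept (bm e p))"

definition bconn :: "bdiag \<Rightarrow> bdiag \<Rightarrow> nat \<times> nat \<Rightarrow> nat \<times> nat \<Rightarrow> bool" where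
  "bconn d e = (bedge d e)\<^sup>*\<^sup>*"

definition bcomp :: "bdiag \<Rightarrow> bdiag \<Rightarrow> bdiag" where
  "bcomp e d = \<lparr>bs = bs d, bt = bt e, bm = (\<lambda>p.
      if valid_pt (bs d) (bt e) p
      then (THE q. valid_pt (bs d) (bt e) q \<and> q \<noteq> p \<and> bconn d e (outp p) (outp q))
      else p)\<rparr>"

text \<open>Number of closed loops formed when stacking e on top of d.\<close>

definition bloops :: "bdiag \<Rightarrow> bdiag \<Rightarrow> nat" where
  "bloops e d = card ((\<lambda>x. {y. bconn d e x y}) `
      {(1, i) | i. i < bt d \<and>
         \<not> (\<exists>q. valid_pt (bs d) (bt e) q \<and> bconn d e (1, i) (outp q))})"

text \<open>Formal expressions for morphisms: generators \<I>_0 (PId0) and \<H> (PH),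
  composition (PComp b a = b a, first a then b), right action by a Brauer
  diagram (PTens), and the K-linear structure. The right action by a general
  morphism of B(delta) is its K-linear extension.\<close>

datatype 'k pterm =
    PId0
  | PH
  | PComp "'k pterm" "'k pterm"
  | PTens "'k pterm" bdiag
  | PZero nat nat
  | PAdd "'k pterm" "'k pterm"
  | PSmul 'k "'k pterm"

fun psrc :: "'k pterm \<Rightarrow> nat" where
  "psrc PId0 = 0"
| "psrc PH = 1"
| "psrc (PComp b a) = psrc a"
| "psrc (PTens t d) = psrc t + bs d"
| "psrc (PZero r s) = r"
| "psrc (PAdd a b) = psrc a"
| "psrc (PSmul c a) = psrc a"

fun ptgt :: "'k pterm \<Rightarrow> nat" where
  "ptgt PId0 = 0"
| "ptgt PH = 1"
| "ptgt (PComp b a) = ptgt b"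
| "ptgt (PTens t d) = ptgt t + bt d"
| "ptgt (PZero r s) = s"
| "ptgt (PAdd a b) = ptgt a"
| "ptgt (PSmul c a) = ptgt a"

fun pwf :: "'k pterm \<Rightarrow> bool" where
  "pwf PId0 = True"
| "pwf PH = True"
| "pwf (PComp b a) = (pwf a \<and> pwf b \<and> ptgt a = psrc b)"
| "pwf (PTens t d) = (pwf t \<and> is_bdiag d)"
| "pwf (PZero r s) = True"
| "pwf (PAdd a b) = (pwf a \<and> pwf b \<and> psrc a = psrc b \<and> ptgt a = ptgt b)"
| "pwf (PSmul c a) = pwf a"

definition ptyp :: "'k pterm \<Rightarrow> nat \<Rightarrow> nat \<Rightarrow> bool" where
  "ptyp a r s \<longleftrightarrow> pwf a \<and> psrc a = r \<and> ptgt a = s"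

definition idt :: "nat \<Rightarrow> 'k pterm" where
  "idt n = PTens PId0 (bid n)"

text \<open>Right action by the composite (in B(delta)) e d = delta^loops \<cdot> (e \<circ> d).\<close>
definition tens_comp :: "'k::comm_ring_1 \<Rightarrow> 'k pterm \<Rightarrow> bdiag \<Rightarrow> bdiag \<Rightarrow> 'k pterm" where
  "tens_comp delta t e d = PSmul (delta ^ bloops e d) (PTens t (bcomp e d))"

definition H01 :: "'k pterm" where "H01 = PTens PH (bid 1)"
definition X0 :: "'k pterm" where "X0 = PTens PId0 bX"
definition H02 :: "'k pterm" where "H02 = PComp X0 (PComp H01 X0)"
definition H12 :: "'k::comm_ring_1 \<Rightarrow> 'k pterm" where
  "H12 delta = PAdd (PTens PId0 bX) (PSmul (-1) (tens_comp delta PId0 bcup bcap))"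

definition ptransp :: "'k pterm \<Rightarrow> 'k pterm" where
  "ptransp D = PComp (PTens PId0 (btens bcap (bid 1)))
                 (PComp (PTens D bX) (PTens PId0 (btens bcup (bid 1))))"

text \<open>The congruence defining Hom spaces of AB(delta): K-linear category axioms,
  axioms of a (K-linear, strict) right action of B(delta), relations (i)-(iii),
  closed under composition, right tensor products and linear combinations.\<close>

inductive peq :: "'k::comm_ring_1 \<Rightarrow> 'k pterm \<Rightarrow> 'k pterm \<Rightarrow> bool" for delta :: 'k where
  refl: "peq delta a a"
| sym: "peq delta a b \<Longrightarrow> peq delta b a"
| trans: "peq delta a b \<Longrightarrow> peq delta b c \<Longrightarrow> peq delta a c"
| cong_comp: "peq delta b b' \<Longrightarrow> peq delta a a' \<Longrightarrow> ptyp a r s \<Longrightarrow> ptyp b s t \<Longrightarrow>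
     peq delta (PComp b a) (PComp b' a')"
| cong_tens: "peq delta a a' \<Longrightarrow> ptyp a r s \<Longrightarrow> is_bdiag d \<Longrightarrow>
     peq delta (PTens a d) (PTens a' d)"
| cong_add: "peq delta a a' \<Longrightarrow> peq delta b b' \<Longrightarrow> ptyp a r s \<Longrightarrow> ptyp b r s \<Longrightarrow>
     peq delta (PAdd a b) (PAdd a' b')"
| cong_smul: "peq delta a a' \<Longrightarrow> ptyp a r s \<Longrightarrow> peq delta (PSmul c a) (PSmul c a')"
| add_assoc: "ptyp a r s \<Longrightarrow> ptyp b r s \<Longrightarrow> ptyp c r s \<Longrightarrow>
     peq delta (PAdd (PAdd a b) c) (PAdd a (PAdd b c))"
| add_comm: "ptyp a r s \<Longrightarrow> ptyp b r s \<Longrightarrow> peq delta (PAdd a b) (PAdd b a)"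
| add_zero: "ptyp a r s \<Longrightarrow> peq delta (PAdd a (PZero r s)) a"
| add_neg: "ptyp a r s \<Longrightarrow> peq delta (PAdd a (PSmul (-1) a)) (PZero r s)"
| smul_add_l: "ptyp a r s \<Longrightarrow> peq delta (PSmul (c + c') a) (PAdd (PSmul c a) (PSmul c' a))"
| smul_add_r: "ptyp a r s \<Longrightarrow> ptyp b r s \<Longrightarrow>
     peq delta (PSmul c (PAdd a b)) (PAdd (PSmul c a) (PSmul c b))"
| smul_smul: "ptyp a r s \<Longrightarrow> peq delta (PSmul c (PSmul c' a)) (PSmul (c * c') a)"
| smul_one: "ptyp a r s \<Longrightarrow> peq delta (PSmul 1 a) a"
| comp_assoc: "ptyp a r s \<Longrightarrow> ptyp b s t \<Longrightarrow> ptyp c t u \<Longrightarrow>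
     peq delta (PComp c (PComp b a)) (PComp (PComp c b) a)"
| id_left: "ptyp a r s \<Longrightarrow> peq delta (PComp (idt s) a) a"
| id_right: "ptyp a r s \<Longrightarrow> peq delta (PComp a (idt r)) a"
| comp_add_l: "ptyp a r s \<Longrightarrow> ptyp b s t \<Longrightarrow> ptyp b' s t \<Longrightarrow>
     peq delta (PComp (PAdd b b') a) (PAdd (PComp b a) (PComp b' a))"
| comp_add_r: "ptyp a r s \<Longrightarrow> ptyp a' r s \<Longrightarrow> ptyp b s t \<Longrightarrow>
     peq delta (PComp b (PAdd a a')) (PAdd (PComp b a) (PComp b a'))"
| comp_smul_l: "ptyp a r s \<Longrightarrow> ptyp b s t \<Longrightarrow>
     peq delta (PComp (PSmul c b) a) (PSmul c (PComp b a))"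
| comp_smul_r: "ptyp a r s \<Longrightarrow> ptyp b s t \<Longrightarrow>
     peq delta (PComp b (PSmul c a)) (PSmul c (PComp b a))"
| tens_add: "ptyp a r s \<Longrightarrow> ptyp b r s \<Longrightarrow> is_bdiag d \<Longrightarrow>
     peq delta (PTens (PAdd a b) d) (PAdd (PTens a d) (PTens b d))"
| tens_smul: "ptyp a r s \<Longrightarrow> is_bdiag d \<Longrightarrow>
     peq delta (PTens (PSmul c a) d) (PSmul c (PTens a d))"
| tens_tens: "ptyp a r s \<Longrightarrow> is_bdiag d \<Longrightarrow> is_bdiag e \<Longrightarrow>
     peq delta (PTens (PTens a d) e) (PTens a (btens d e))"
| tens_unit: "ptyp a r s \<Longrightarrow> peq delta (PTens a (bid 0)) a"
| interchange: "ptyp a r s \<Longrightarrow> ptyp b s t \<Longrightarrow> is_bdiag d \<Longrightarrow> is_bdiag e \<Longrightarrow> bt d = bs e \<Longrightarrow>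
     peq delta (PComp (PTens b e) (PTens a d)) (tens_comp delta (PComp b a) e d)"
| rel_i0: "is_bdiag A \<Longrightarrow> is_bdiag B \<Longrightarrow> bt A = bs B \<Longrightarrow>
     peq delta (PComp (PTens PId0 B) (PTens PId0 A)) (tens_comp delta PId0 B A)"
| rel_i1: "is_bdiag A \<Longrightarrow> is_bdiag B \<Longrightarrow> bt A = bs B \<Longrightarrow>
     peq delta (PComp (PTens PH B) (PTens (idt 1) A)) (tens_comp delta PH B A)"
| rel_i2: "is_bdiag A \<Longrightarrow> is_bdiag B \<Longrightarrow> bt A = bs B \<Longrightarrow>
     peq delta (PComp (PTens (idt 1) B) (PTens PH A)) (tens_comp delta PH B A)"
| rel_ii: "peq delta
     (PAdd (PComp H01 (PAdd H02 (H12 delta)))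
           (PSmul (-1) (PComp (PAdd H02 (H12 delta)) H01)))
     (PZero 2 2)"
| rel_iii: "peq delta (ptransp PH) (PSmul (-1) PH)"

fun hpow :: "nat \<Rightarrow> 'k pterm" where
  "hpow 0 = idt 1"
| "hpow (Suc 0) = PH"
| "hpow (Suc n) = PComp PH (hpow n)"

definition PPi :: "'k pterm" where "PPi = PTens PId0 bcap"
definition PAmalg :: "'k pterm" where "PAmalg = PTens PId0 bcup"

definition Zl :: "nat \<Rightarrow> 'k pterm" where
  "Zl l = PComp PPi (PComp (PTens (hpow l) (bid 1)) PAmalg)"

end

theory Submission
  imports Defs
begin

definition vpts :: "nat \<Rightarrow> nat \<Rightarrow> (bool \<times> nat) list" where
  "vpts r s = map (Pair False) [0..<r] @ map (Pair True) [0..<s]"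

lemma valid_pt_vpts: "valid_pt r s p \<longleftrightarrow> p \<in> set (vpts r s)"
  by (cases p) (auto simp: valid_pt_def vpts_def)

definition edges :: "bdiag \<Rightarrow> bdiag \<Rightarrow> ((nat\<times>nat)\<times>(nat\<times>nat)) list" where
  "edges d e = map (\<lambda>p. (dpt p, dpt (bm d p))) (vpts (bs d) (bt d)) @
               map (\<lambda>p. (ept p, ept (bm e p))) (vpts (bs e) (bt e))"

lemma bedge_edges: "bedge d e = (\<lambda>x y. (x,y) \<in> set (edges d e))"
  by (auto simp: bedge_def edges_def valid_pt_vpts fun_eq_iff)

definition stepl :: "('a\<times>'a) list \<Rightarrow> 'a list \<Rightarrow> 'a list" where
  "stepl E S = remdups (S @ map snd (filter (\<lambda>e. fst e \<in> set S) E))"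

fun reachl :: "('a\<times>'a) list \<Rightarrow> nat \<Rightarrow> 'a \<Rightarrow> 'a list" where
  "reachl E 0 x = [x]"
| "reachl E (Suc n) x = stepl E (reachl E n x)"

lemma reachl_sound: "y \<in> set (reachl E n x) \<Longrightarrow> (\<lambda>u v. (u,v) \<in> set E)\<^sup>*\<^sup>* x y"
proof (induction n arbitrary: y)
  case 0 then show ?case by simp
next
  case (Suc n)
  then show ?case
    by (auto simp: stepl_def) (metis (no_types, lifting) rtranclp.rtrancl_into_rtrancl)
qed

lemma reachl_complete:
  assumes cl: "set (stepl E (reachl E n x)) \<subseteq> set (reachl E n x)"
    and r: "(\<lambda>u v. (u,v) \<in> set E)\<^sup>*\<^sup>* x y"
  shows "y \<in> set (reachl E n x)"
  using r
proof (induction rule: rtranclp_induct)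
  case base
  have "x \<in> set (reachl E n x)" by (induction n) (auto simp: stepl_def)
  then show ?case .
next
  case (step y z)
  then have "z \<in> set (stepl E (reachl E n x))" by (force simp: stepl_def)
  with cl show ?case by blast
qed

lemma fold_reachl: "fold (\<lambda>_ S. stepl E S) L [x] = reachl E (length L) x"
proof -
  have "fold (\<lambda>_ S. stepl E S) L (reachl E n x) = reachl E (n + length L) x" for n
  proof (induction L arbitrary: n)
    case Nil then show ?case by simp
  next
    case (Cons a L)
    have "fold (\<lambda>_ S. stepl E S) (a # L) (reachl E n x) = fold (\<lambda>_ S. stepl E S) L (reachl E (Suc n) x)"
      by simp
    also have "\<dots> = reachl E (Suc n + length L) x" by (rule Cons.IH)
    finally show ?case by simp
  qed
  from this[of 0] show ?thesis by simp
qed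

definition RL :: "bdiag \<Rightarrow> bdiag \<Rightarrow> nat \<times> nat \<Rightarrow> (nat \<times> nat) list" where
  "RL e d x = fold (\<lambda>_ S. stepl (edges d e) S) (edges d e) [x]"

definition closedR :: "bdiag \<Rightarrow> bdiag \<Rightarrow> nat \<times> nat \<Rightarrow> bool" where
  "closedR e d x \<longleftrightarrow> set (stepl (edges d e) (RL e d x)) \<subseteq> set (RL e d x)"

lemma bconn_RL: "closedR e d x \<Longrightarrow> bconn d e x y \<longleftrightarrow> y \<in> set (RL e d x)"
  unfolding closedR_def RL_def bconn_def bedge_edges
  using reachl_sound reachl_complete fold_reachl by metis

lemma bconn_RL_sound: "y \<in> set (RL e d x) \<Longrightarrow> bconn d e x y"
  unfolding RL_def bconn_def bedge_edges using reachl_sound fold_reachl by metis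

definition partners :: "bdiag \<Rightarrow> bdiag \<Rightarrow> bool \<times> nat \<Rightarrow> (bool \<times> nat) list" where
  "partners e d p = filter (\<lambda>q. q \<noteq> p \<and> outp q \<in> set (RL e d (outp p))) (vpts (bs d) (bt e))"

definition goodc :: "bdiag \<Rightarrow> bdiag \<Rightarrow> bool" where
  "goodc e d \<longleftrightarrow> (\<forall>p \<in> set (vpts (bs d) (bt e)). closedR e d (outp p) \<and> length (partners e d p) = 1)"

lemma bm_bcomp:
  assumes g: "goodc e d"
  shows "bm (bcomp e d) p = (if valid_pt (bs d) (bt e) p then hd (partners e d p) else p)"
proof (cases "valid_pt (bs d) (bt e) p")
  case True
  then have pv: "p \<in> set (vpts (bs d) (bt e))" by (simp add: valid_pt_vpts)
  with g have c: "closedR e d (outp p)" and l: "length (partners e d p) = 1"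
    by (auto simp: goodc_def)
  from l obtain q0 where q0: "partners e d p = [q0]"
    by (cases "partners e d p") auto
  have "\<And>q. (valid_pt (bs d) (bt e) q \<and> q \<noteq> p \<and> bconn d e (outp p) (outp q)) \<longleftrightarrow> q \<in> set (partners e d p)"
    using bconn_RL[OF c] by (auto simp: partners_def valid_pt_vpts)
  then have "\<And>q. (valid_pt (bs d) (bt e) q \<and> q \<noteq> p \<and> bconn d e (outp p) (outp q)) \<longleftrightarrow> q = q0"
    using q0 by simp
  then show ?thesis using True q0 by (simp add: bcomp_def)
qed (simp add: bcomp_def)

definition nolpall :: "bdiag \<Rightarrow> bdiag \<Rightarrow> bool" where
  "nolpall e d \<longleftrightarrow> (\<forall>i \<in> set [0..<bt d]. \<exists>q \<in> set (vpts (bs d) (bt e)). outp q \<in> set (RL e d (1,i)))"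

lemma bloops_zero: "nolpall e d \<Longrightarrow> bloops e d = 0"
proof -
  assume n: "nolpall e d"
  have "\<exists>q. valid_pt (bs d) (bt e) q \<and> bconn d e (1, i) (outp q)" if i: "i < bt d" for i
  proof -
    from n i have "\<exists>q\<in>set (vpts (bs d) (bt e)). outp q \<in> set (RL e d (1,i))"
      unfolding nolpall_def by simp
    then show ?thesis using bconn_RL_sound valid_pt_vpts by metis
  qed
  then have "{(1::nat, i) |i. i < bt d \<and> (\<nexists>q. valid_pt (bs d) (bt e) q \<and> bconn d e (1, i) (outp q))} = {}"
    by blast
  then show ?thesis unfolding bloops_def by simp
qed

definition fixinv :: "bdiag \<Rightarrow> bool" where
  "fixinv d \<longleftrightarrow> (\<forall>p. \<not> valid_pt (bs d) (bt d) p \<longrightarrow> bm d p = p)"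

lemma diag_eqI:
  assumes "fixinv d1" "fixinv d2" "bs d1 = bs d2" "bt d1 = bt d2"
    "\<forall>p \<in> set (vpts (bs d1) (bt d1)). bm d1 p = bm d2 p"
  shows "d1 = d2"
proof -
  have "bm d1 = bm d2"
    using assms by (auto simp: fixinv_def fun_eq_iff valid_pt_vpts)
  then show ?thesis using assms by (cases d1, cases d2) auto
qed

lemma is_bdiagI:
  assumes "fixinv d"
    "\<forall>p \<in> set (vpts (bs d) (bt d)). bm d p \<in> set (vpts (bs d) (bt d)) \<and> bm d p \<noteq> p \<and> bm d (bm d p) = p"
  shows "is_bdiag d"
  using assms by (auto simp: is_bdiag_def fixinv_def valid_pt_vpts)

lemma fixinv_bcomp: "fixinv (bcomp e d)"
  by (simp add: fixinv_def bcomp_def)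

lemma fixinv_bid: "fixinv (bid n)"
  by (auto simp: fixinv_def bid_def valid_pt_def)
lemma fixinv_bX: "fixinv bX"
  by (auto simp: fixinv_def bX_def valid_pt_def)
lemma fixinv_bcap: "fixinv bcap"
  by (auto simp: fixinv_def bcap_def valid_pt_def)
lemma fixinv_bcup: "fixinv bcup"
  by (auto simp: fixinv_def bcup_def valid_pt_def)
lemma fixinv_btens: "fixinv d \<Longrightarrow> fixinv e \<Longrightarrow> fixinv (btens d e)"
  by (auto simp: fixinv_def btens_def valid_pt_def Let_def split: if_splits)


lemma upt_small: "[0..<0] = []" "[0..<1] = [0]" "[0..<2] = [0,1]" "[0..<3] = [0,1,2]"
  "[0..<4] = [0,1,2,3]" "[0..<5] = [0,1,2,3,4]" "[0..<6] = [0,1,2,3,4,5]"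
  by (simp_all add: upt_rec)

lemmas evs = upt_small vpts_def edges_def stepl_def RL_def closedR_def partners_def goodc_def
  dpt_def ept_def outp_def nolpall_def

definition goodp :: "bdiag \<Rightarrow> bdiag \<Rightarrow> bool \<times> nat \<Rightarrow> bool" where
  "goodp e d p \<longleftrightarrow> closedR e d (outp p) \<and> length (partners e d p) = 1"

lemma goodc_list: "goodc e d \<longleftrightarrow> list_all (goodp e d) (vpts (bs d) (bt e))"
  by (simp add: goodc_def goodp_def list_all_iff)

definition nlp :: "bdiag \<Rightarrow> bdiag \<Rightarrow> nat \<Rightarrow> bool" where
  "nlp e d i \<longleftrightarrow> (\<exists>q \<in> set (vpts (bs d) (bt e)). outp q \<in> set (RL e d (1,i)))"

lemma nolpall_list: "nolpall e d \<longleftrightarrow> list_all (nlp e d) [0..<bt d]"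
  by (simp add: nolpall_def nlp_def list_all_iff)

definition mkd :: "nat \<Rightarrow> nat \<Rightarrow> ((bool \<times> nat) \<times> (bool \<times> nat)) list \<Rightarrow> bdiag" where
  "mkd r s L = \<lparr>bs = r, bt = s, bm = (\<lambda>p. if valid_pt r s p then
      (case map_of (L @ map prod.swap L) p of Some q \<Rightarrow> q | None \<Rightarrow> p) else p)\<rparr>"

lemma bs_mkd[simp]: "bs (mkd r s L) = r" and bt_mkd[simp]: "bt (mkd r s L) = s"
  by (simp_all add: mkd_def)
lemma fixinv_mkd: "fixinv (mkd r s L)"
  by (simp add: fixinv_def mkd_def)

lemma bs_bid[simp]: "bs (bid n) = n" and bt_bid[simp]: "bt (bid n) = n"
  by (simp_all add: bid_def)
lemma bs_bX[simp]: "bs bX = 2" and bt_bX[simp]: "bt bX = 2"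
  by (simp_all add: bX_def)
lemma bs_bcap[simp]: "bs bcap = 2" and bt_bcap[simp]: "bt bcap = 0"
  by (simp_all add: bcap_def)
lemma bs_bcup[simp]: "bs bcup = 0" and bt_bcup[simp]: "bt bcup = 2"
  by (simp_all add: bcup_def)
lemma bs_btens[simp]: "bs (btens d e) = bs d + bs e" and bt_btens[simp]: "bt (btens d e) = bt d + bt e"
  by (simp_all add: btens_def)
lemma bs_bcomp[simp]: "bs (bcomp e d) = bs d" and bt_bcomp[simp]: "bt (bcomp e d) = bt e"
  by (simp_all add: bcomp_def)

lemmas fixinvs = fixinv_bcomp fixinv_bid fixinv_bX fixinv_bcap fixinv_bcup fixinv_btens fixinv_mkd

lemma bcomp_eqI:
  assumes "goodc e d" "fixinv r" "bs r = bs d" "bt r = bt e"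
    "list_all (\<lambda>p. hd (partners e d p) = bm r p) (vpts (bs d) (bt e))"
  shows "bcomp e d = r"
  apply (rule diag_eqI)
  using assms by (auto simp: fixinv_bcomp bm_bcomp list_all_iff valid_pt_vpts)

lemma diag_eq_list:
  assumes "fixinv d1" "fixinv d2" "bs d1 = bs d2" "bt d1 = bt d2"
    "list_all (\<lambda>p. bm d1 p = bm d2 p) (vpts (bs d1) (bt d1))"
  shows "d1 = d2"
  using assms by (intro diag_eqI) (auto simp: list_all_iff)

lemma is_bdiag_list:
  assumes "fixinv d"
    "list_all (\<lambda>p. bm d p \<in> set (vpts (bs d) (bt d)) \<and> bm d p \<noteq> p \<and> bm d (bm d p) = p) (vpts (bs d) (bt d))"
  shows "is_bdiag d"
  using assms by (intro is_bdiagI) (auto simp: list_all_iff)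

lemmas dd = bX_def bcap_def bcup_def bid_def btens_def Let_def mkd_def valid_pt_def

lemma bedge_d: "valid_pt (bs d) (bt d) p \<Longrightarrow> bedge d e (dpt p) (dpt (bm d p))"
  unfolding bedge_def by blast
lemma bedge_e: "valid_pt (bs e) (bt e) p \<Longrightarrow> bedge d e (ept p) (ept (bm e p))"
  unfolding bedge_def by blast

lemma bconn_step: "bedge d e x y \<Longrightarrow> bconn d e y z \<Longrightarrow> bconn d e x z"
  unfolding bconn_def by (rule converse_rtranclp_into_rtranclp)
lemma bconn_refl: "bconn d e x x"
  unfolding bconn_def by simp

lemma is_bdiagD:
  assumes "is_bdiag d" "valid_pt (bs d) (bt d) p"
  shows "valid_pt (bs d) (bt d) (bm d p)" "bm d p \<noteq> p" "bm d (bm d p) = p"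
  using assms unfolding is_bdiag_def by meson+

lemma bm_bid: "bm (bid n) (b, i) = (if i < n then (\<not> b, i) else (b, i))"
  by (simp add: bid_def)

lemma bcomp_bid_top:
  assumes d: "is_bdiag d" and n: "bt d = n"
  shows "bcomp (bid n) d = d" "bloops (bid n) d = 0"
proof -
  define \<phi> :: "nat \<times> nat \<Rightarrow> bool \<times> nat" where "\<phi> x = (fst x \<noteq> 0, snd x)" for x
  have phi_dpt: "\<phi> (dpt p) = p" for p by (cases p) (simp add: \<phi>_def dpt_def)
  have phi_ept: "\<phi> (ept p) = (True, snd p)" for p by (cases p) (simp add: \<phi>_def ept_def)
  have phi_outp: "\<phi> (outp p) = p" for p by (cases p) (simp add: \<phi>_def outp_def)
  have inv: "\<phi> z \<in> {p, bm d p}" if p: "valid_pt (bs d) (bt d) p" and c: "bconn d (bid n) y z"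
    and y: "\<phi> y \<in> {p, bm d p}" for p y z
    using c[unfolded bconn_def] y
  proof (induction rule: rtranclp_induct)
    case base then show ?case by simp
  next
    case (step u v)
    from step.hyps(2) show ?case
    proof (unfold bedge_def, elim disjE exE conjE)
      fix p' assume v1: "valid_pt (bs d) (bt d) p'" and u: "u = dpt p'" and v: "v = dpt (bm d p')"
      have "p' \<in> {p, bm d p}" using step.IH step.prems u phi_dpt by simp
      then show ?thesis using v phi_dpt is_bdiagD[OF d p] by auto
    next
      fix p' assume v1: "valid_pt (bs (bid n)) (bt (bid n)) p'" and u: "u = ept p'" and v: "v = ept (bm (bid n) p')"
      obtain b i where p': "p' = (b, i)" by (cases p')
      have "\<phi> v = \<phi> u" using u v p' phi_ept bm_bid v1 by (auto simp: valid_pt_def)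
      then show ?thesis using step.IH step.prems by simp
    qed
  qed
  have path: "bconn d (bid n) (outp p) (outp (bm d p))" if p: "valid_pt (bs d) (bt d) p" for p
  proof -
    have l2: "bconn d (bid n) (dpt q) (outp q)" if "valid_pt (bs d) (bt d) q" for q
    proof (cases q)
      case (Pair b i)
      show ?thesis
      proof (cases b)
        case True
        have "bedge d (bid n) (ept (False, i)) (ept (bm (bid n) (False, i)))"
          using that Pair True n by (intro bedge_e) (auto simp: valid_pt_def)
        then have "bedge d (bid n) (dpt q) (outp q)"
          using that Pair True n by (auto simp: bm_bid valid_pt_def dpt_def ept_def outp_def)
        then show ?thesis using bconn_step bconn_refl by metis
      next
        case False then show ?thesis using Pair bconn_refl by (simp add: dpt_def outp_def)
      qed
    qed
    have l1: "bconn d (bid n) (outp q) (dpt q)" if "valid_pt (bs d) (bt d) q" for q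
    proof (cases q)
      case (Pair b i)
      show ?thesis
      proof (cases b)
        case True
        have "bedge d (bid n) (ept (True, i)) (ept (bm (bid n) (True, i)))"
          using that Pair True n by (intro bedge_e) (auto simp: valid_pt_def)
        then have "bedge d (bid n) (outp q) (dpt q)"
          using that Pair True n by (auto simp: bm_bid valid_pt_def dpt_def ept_def outp_def)
        then show ?thesis using bconn_step bconn_refl by metis
      next
        case False then show ?thesis using Pair bconn_refl by (simp add: dpt_def outp_def)
      qed
    qed
    have "bconn d (bid n) (outp p) (dpt (bm d p))"
      using l1[OF p] bedge_d[OF p, of "bid n"] unfolding bconn_def
      by (meson rtranclp.rtrancl_into_rtrancl)
    then show ?thesis using l2[OF is_bdiagD(1)[OF d p]] unfolding bconn_def by (meson rtranclp_trans)
  qed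
  show "bcomp (bid n) d = d"
  proof (rule diag_eqI)
    show "fixinv (bcomp (bid n) d)" by (rule fixinv_bcomp)
    show "fixinv d" using d by (simp add: is_bdiag_def fixinv_def)
    show "bs (bcomp (bid n) d) = bs d" "bt (bcomp (bid n) d) = bt d" using n by simp_all
    show "\<forall>p\<in>set (vpts (bs (bcomp (bid n) d)) (bt (bcomp (bid n) d))). bm (bcomp (bid n) d) p = bm d p"
    proof
      fix p assume "p \<in> set (vpts (bs (bcomp (bid n) d)) (bt (bcomp (bid n) d)))"
      then have p: "valid_pt (bs d) (bt d) p" using n by (simp add: valid_pt_vpts)
      have "(THE q. valid_pt (bs d) (bt (bid n)) q \<and> q \<noteq> p \<and> bconn d (bid n) (outp p) (outp q)) = bm d p"
      proof (rule the_equality)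
        show "valid_pt (bs d) (bt (bid n)) (bm d p) \<and> bm d p \<noteq> p \<and> bconn d (bid n) (outp p) (outp (bm d p))"
          using is_bdiagD[OF d p] path[OF p] n by simp
      next
        fix q assume q: "valid_pt (bs d) (bt (bid n)) q \<and> q \<noteq> p \<and> bconn d (bid n) (outp p) (outp q)"
        have "\<phi> (outp q) \<in> {p, bm d p}" using inv[OF p, of "outp p" "outp q"] q phi_outp by simp
        then show "q = bm d p" using q phi_outp by simp
      qed
      then show "bm (bcomp (bid n) d) p = bm d p" using p n by (simp add: bcomp_def)
    qed
  qed
  show "bloops (bid n) d = 0"
  proof -
    have "\<exists>q. valid_pt (bs d) (bt (bid n)) q \<and> bconn d (bid n) (1, i) (outp q)" if i: "i < bt d" for i
    proof (intro exI conjI)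
      show "valid_pt (bs d) (bt (bid n)) (True, i)" using i n by (simp add: valid_pt_def)
      have "bedge d (bid n) (ept (False, i)) (ept (bm (bid n) (False, i)))"
        using i n by (intro bedge_e) (auto simp: valid_pt_def)
      then have "bedge d (bid n) (1, i) (outp (True, i))"
        using i n by (simp add: bm_bid ept_def outp_def)
      then show "bconn d (bid n) (1, i) (outp (True, i))" using bconn_step bconn_refl by metis
    qed
    then have "{(1::nat, i) |i. i < bt d \<and> (\<nexists>q. valid_pt (bs d) (bt (bid n)) q \<and> bconn d (bid n) (1, i) (outp q))} = {}"
      by blast
    then show ?thesis unfolding bloops_def by simp
  qed
qed

lemma bcomp_bid_bot:
  assumes d: "is_bdiag d" and n: "bs d = n"
  shows "bcomp d (bid n) = d" "bloops d (bid n) = 0"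
proof -
  define \<phi> :: "nat \<times> nat \<Rightarrow> bool \<times> nat" where "\<phi> x = (fst x = 2, snd x)" for x
  have phi_dpt: "\<phi> (dpt p) = (False, snd p)" for p by (cases p) (simp add: \<phi>_def dpt_def)
  have phi_ept: "\<phi> (ept p) = p" for p by (cases p) (simp add: \<phi>_def ept_def)
  have phi_outp: "\<phi> (outp p) = p" for p by (cases p) (simp add: \<phi>_def outp_def)
  have inv: "\<phi> z \<in> {p, bm d p}" if p: "valid_pt (bs d) (bt d) p" and c: "bconn (bid n) d y z"
    and y: "\<phi> y \<in> {p, bm d p}" for p y z
    using c[unfolded bconn_def] y
  proof (induction rule: rtranclp_induct)
    case base then show ?case by simp
  next
    case (step u v)
    from step.hyps(2) show ?case
    proof (unfold bedge_def, elim disjE exE conjE)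
      fix p' assume v1: "valid_pt (bs (bid n)) (bt (bid n)) p'" and u: "u = dpt p'" and v: "v = dpt (bm (bid n) p')"
      obtain b i where p': "p' = (b, i)" by (cases p')
      have "\<phi> v = \<phi> u" using u v p' phi_dpt bm_bid v1 by (auto simp: valid_pt_def)
      then show ?thesis using step.IH step.prems by simp
    next
      fix p' assume v1: "valid_pt (bs d) (bt d) p'" and u: "u = ept p'" and v: "v = ept (bm d p')"
      have "p' \<in> {p, bm d p}" using step.IH step.prems u phi_ept by simp
      then show ?thesis using v phi_ept is_bdiagD[OF d p] by auto
    qed
  qed
  have l1: "bconn (bid n) d (outp q) (ept q)" if "valid_pt (bs d) (bt d) q" for q
  proof (cases q)
    case (Pair b i)
    show ?thesis
    proof (cases b)
      case False
      have "bedge (bid n) d (dpt (False, i)) (dpt (bm (bid n) (False, i)))"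
        using that Pair False n by (intro bedge_d) (auto simp: valid_pt_def)
      then have "bedge (bid n) d (outp q) (ept q)"
        using that Pair False n by (auto simp: bm_bid valid_pt_def dpt_def ept_def outp_def)
      then show ?thesis using bconn_step bconn_refl by metis
    next
      case True then show ?thesis using Pair bconn_refl by (simp add: ept_def outp_def)
    qed
  qed
  have l2: "bconn (bid n) d (ept q) (outp q)" if "valid_pt (bs d) (bt d) q" for q
  proof (cases q)
    case (Pair b i)
    show ?thesis
    proof (cases b)
      case False
      have "bedge (bid n) d (dpt (True, i)) (dpt (bm (bid n) (True, i)))"
        using that Pair False n by (intro bedge_d) (auto simp: valid_pt_def)
      then have "bedge (bid n) d (ept q) (outp q)"
        using that Pair False n by (auto simp: bm_bid valid_pt_def dpt_def ept_def outp_def)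
      then show ?thesis using bconn_step bconn_refl by metis
    next
      case True then show ?thesis using Pair bconn_refl by (simp add: ept_def outp_def)
    qed
  qed
  have path: "bconn (bid n) d (outp p) (outp (bm d p))" if p: "valid_pt (bs d) (bt d) p" for p
  proof -
    have "bconn (bid n) d (outp p) (ept (bm d p))"
      using l1[OF p] bedge_e[OF p, of "bid n"] unfolding bconn_def
      by (meson rtranclp.rtrancl_into_rtrancl)
    then show ?thesis using l2[OF is_bdiagD(1)[OF d p]] unfolding bconn_def by (meson rtranclp_trans)
  qed
  show "bcomp d (bid n) = d"
  proof (rule diag_eqI)
    show "fixinv (bcomp d (bid n))" by (rule fixinv_bcomp)
    show "fixinv d" using d by (simp add: is_bdiag_def fixinv_def)
    show "bs (bcomp d (bid n)) = bs d" "bt (bcomp d (bid n)) = bt d" using n by simp_all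
    show "\<forall>p\<in>set (vpts (bs (bcomp d (bid n))) (bt (bcomp d (bid n)))). bm (bcomp d (bid n)) p = bm d p"
    proof
      fix p assume "p \<in> set (vpts (bs (bcomp d (bid n))) (bt (bcomp d (bid n))))"
      then have p: "valid_pt (bs d) (bt d) p" using n by (simp add: valid_pt_vpts)
      have "(THE q. valid_pt (bs (bid n)) (bt d) q \<and> q \<noteq> p \<and> bconn (bid n) d (outp p) (outp q)) = bm d p"
      proof (rule the_equality)
        show "valid_pt (bs (bid n)) (bt d) (bm d p) \<and> bm d p \<noteq> p \<and> bconn (bid n) d (outp p) (outp (bm d p))"
          using is_bdiagD[OF d p] path[OF p] n by simp
      next
        fix q assume q: "valid_pt (bs (bid n)) (bt d) q \<and> q \<noteq> p \<and> bconn (bid n) d (outp p) (outp q)"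
        have "\<phi> (outp q) \<in> {p, bm d p}" using inv[OF p, of "outp p" "outp q"] q phi_outp by simp
        then show "q = bm d p" using q phi_outp by simp
      qed
      then show "bm (bcomp d (bid n)) p = bm d p" using p n by (simp add: bcomp_def)
    qed
  qed
  show "bloops d (bid n) = 0"
  proof -
    have "\<exists>q. valid_pt (bs (bid n)) (bt d) q \<and> bconn (bid n) d (1, i) (outp q)" if i: "i < bt (bid n)" for i
    proof (intro exI conjI)
      show "valid_pt (bs (bid n)) (bt d) (False, i)" using i n by (simp add: valid_pt_def)
      have "bedge (bid n) d (dpt (True, i)) (dpt (bm (bid n) (True, i)))"
        using i n by (intro bedge_d) (auto simp: valid_pt_def)
      then have "bedge (bid n) d (1, i) (outp (False, i))"
        using i n by (simp add: bm_bid dpt_def outp_def)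
      then show "bconn (bid n) d (1, i) (outp (False, i))" using bconn_step bconn_refl by metis
    qed
    then have "{(1::nat, i) |i. i < bt (bid n) \<and> (\<nexists>q. valid_pt (bs (bid n)) (bt d) q \<and> bconn (bid n) d (1, i) (outp q))} = {}"
      by blast
    then show ?thesis unfolding bloops_def by simp
  qed
qed

lemma is_bdiag_bid[simp]: "is_bdiag (bid n)"
  by (auto simp: is_bdiag_def bid_def valid_pt_def)

lemma btens_bid: "btens (bid m) (bid n) = bid (m + n)"
  by (auto simp: btens_def bid_def Let_def fun_eq_iff)

lemma bcomp_bid_bid: "bcomp (bid n) (bid n) = bid n" "bloops (bid n) (bid n) = 0"
  using bcomp_bid_top[of "bid n" n] by simp_all

definition RLE :: "((nat\<times>nat)\<times>(nat\<times>nat)) list \<Rightarrow> nat \<times> nat \<Rightarrow> (nat \<times> nat) list" where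
  "RLE E x = fold (\<lambda>_ S. stepl E S) E [x]"
definition partnersE where
  "partnersE E r s p = filter (\<lambda>q. q \<noteq> p \<and> outp q \<in> set (RLE E (outp p))) (vpts r s)"
definition goodpE where
  "goodpE E r s p \<longleftrightarrow> set (stepl E (RLE E (outp p))) \<subseteq> set (RLE E (outp p)) \<and> length (partnersE E r s p) = 1"

lemma bcomp_eqI2:
  assumes "edges d e = E" "list_all (goodpE E (bs d) (bt e)) (vpts (bs d) (bt e))"
    "fixinv r" "bs r = bs d" "bt r = bt e"
    "list_all (\<lambda>p. hd (partnersE E (bs d) (bt e) p) = bm r p) (vpts (bs d) (bt e))"
  shows "bcomp e d = r"
proof -
  have R: "RL e d x = RLE E x" for x using assms(1) by (simp add: RL_def RLE_def)
  show ?thesis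
    apply (rule bcomp_eqI)
    using assms
    by (simp_all add: goodc_list goodpE_def goodp_def closedR_def R partners_def partnersE_def
        list_all_iff assms(1)[symmetric])
qed

definition nlpE where
  "nlpE E r s i \<longleftrightarrow> (\<exists>q \<in> set (vpts r s). outp q \<in> set (RLE E (1,i)))"

lemma bloops_zero2:
  assumes "edges d e = E" "list_all (nlpE E (bs d) (bt e)) [0..<bt d]"
  shows "bloops e d = 0"
proof -
  have R: "RL e d x = RLE E x" for x using assms(1) by (simp add: RL_def RLE_def)
  show ?thesis
    apply (rule bloops_zero)
    using assms(2) by (simp add: nolpall_list list_all_iff nlp_def nlpE_def R)
qed

lemmas ph1 = vpts_def upt_small
lemmas ph2 = goodpE_def nlpE_def partnersE_def RLE_def stepl_def outp_def dd
lemmas phe = edges_def vpts_def upt_small dpt_def ept_def dd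

definition pe :: "'k::comm_ring_1 \<Rightarrow> 'k pterm \<Rightarrow> 'k pterm \<Rightarrow> bool" where
  "pe dl a b \<longleftrightarrow> pwf a \<and> pwf b \<and> psrc a = psrc b \<and> ptgt a = ptgt b \<and> peq dl a b"

fun cl :: "'k pterm list \<Rightarrow> 'k pterm" where
  "cl [] = PId0"
| "cl [a] = a"
| "cl (a # b # l) = PComp a (cl (b # l))"

fun cwf :: "'k pterm list \<Rightarrow> bool" where
  "cwf [] = False"
| "cwf [a] = pwf a"
| "cwf (a # b # l) = (pwf a \<and> psrc a = ptgt b \<and> cwf (b # l))"

lemma cl_Cons: "l \<noteq> [] \<Longrightarrow> cl (a # l) = PComp a (cl l)"
  by (cases l) auto
lemma cwf_Cons: "l \<noteq> [] \<Longrightarrow> cwf (a # l) = (pwf a \<and> psrc a = ptgt (hd l) \<and> cwf l)"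
  by (cases l) auto

lemma cwf_props: "cwf l \<Longrightarrow> pwf (cl l) \<and> psrc (cl l) = psrc (last l) \<and> ptgt (cl l) = ptgt (hd l)"
  by (induction l rule: cwf.induct) auto

lemma cwf_append: "xs \<noteq> [] \<Longrightarrow> ys \<noteq> [] \<Longrightarrow>
   cwf (xs @ ys) = (cwf xs \<and> cwf ys \<and> psrc (last xs) = ptgt (hd ys))"
proof (induction xs rule: cwf.induct)
  case 1 then show ?case by simp
next
  case (2 a) then show ?case by (cases ys) auto
next
  case (3 a b l) then show ?case by auto
qed

lemma cwf_all: "cwf l \<Longrightarrow> x \<in> set l \<Longrightarrow> pwf x"
  by (induction l rule: cwf.induct) auto

lemma cwf_subst1: "cwf (pre @ [a] @ post) \<Longrightarrow> pwf b \<Longrightarrow> psrc b = psrc a \<Longrightarrow> ptgt b = ptgt a \<Longrightarrow>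
  cwf (pre @ [b] @ post) \<and> psrc (cl (pre @ [b] @ post)) = psrc (cl (pre @ [a] @ post)) \<and>
  ptgt (cl (pre @ [b] @ post)) = ptgt (cl (pre @ [a] @ post))"
proof (induction pre)
  case Nil then show ?case by (cases post) (auto simp: cl_Cons cwf_Cons)
next
  case (Cons x pre)
  then show ?case by (auto simp: cl_Cons cwf_Cons cwf_props)
qed

context fixes dl :: "'k::comm_ring_1" begin

lemma pe_refl: "pwf a \<Longrightarrow> pe dl a a"
  by (simp add: pe_def peq.refl)
lemma pe_sym: "pe dl a b \<Longrightarrow> pe dl b a"
  by (auto simp: pe_def intro: peq.sym)
lemma pe_trans[trans]: "pe dl a b \<Longrightarrow> pe dl b c \<Longrightarrow> pe dl a c"
  by (auto simp: pe_def intro: peq.trans)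
lemma pe_peq: "pe dl a b \<Longrightarrow> peq dl a b"
  by (simp add: pe_def)
lemma pe_wf: "pe dl a b \<Longrightarrow> pwf a" "pe dl a b \<Longrightarrow> pwf b"
  by (simp_all add: pe_def)
lemma pe_src: "pe dl a b \<Longrightarrow> psrc b = psrc a" and pe_tgt: "pe dl a b \<Longrightarrow> ptgt b = ptgt a"
  by (simp_all add: pe_def)

lemma peI: "peq dl a b \<Longrightarrow> pwf a \<Longrightarrow> pwf b \<Longrightarrow> psrc a = psrc b \<Longrightarrow> ptgt a = ptgt b \<Longrightarrow> pe dl a b"
  by (simp add: pe_def)

lemma pty: "pwf a \<Longrightarrow> ptyp a (psrc a) (ptgt a)" by (simp add: ptyp_def)

lemma pe_comp: "pe dl b b' \<Longrightarrow> pe dl a a' \<Longrightarrow> psrc b = ptgt a \<Longrightarrow> pe dl (PComp b a) (PComp b' a')"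
  unfolding pe_def by (auto intro!: peq.cong_comp[where r="psrc a" and s="ptgt a" and t="ptgt b"] simp: ptyp_def)
lemma pe_tens: "pe dl a a' \<Longrightarrow> is_bdiag d \<Longrightarrow> pe dl (PTens a d) (PTens a' d)"
  unfolding pe_def by (auto intro!: peq.cong_tens[where r="psrc a" and s="ptgt a"] simp: ptyp_def)
lemma pe_add: "pe dl a a' \<Longrightarrow> pe dl b b' \<Longrightarrow> psrc a = psrc b \<Longrightarrow> ptgt a = ptgt b \<Longrightarrow> pe dl (PAdd a b) (PAdd a' b')"
  unfolding pe_def by (auto intro!: peq.cong_add[where r="psrc a" and s="ptgt a"] simp: ptyp_def)
lemma pe_smul: "pe dl a a' \<Longrightarrow> pe dl (PSmul c a) (PSmul c a')"
  unfolding pe_def by (auto intro!: peq.cong_smul[where r="psrc a" and s="ptgt a"] simp: ptyp_def)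

lemma pe_compL: "pe dl b b' \<Longrightarrow> pwf a \<Longrightarrow> psrc b = ptgt a \<Longrightarrow> pe dl (PComp b a) (PComp b' a)"
  by (rule pe_comp) (auto intro: pe_refl)
lemma pe_compR: "pe dl a a' \<Longrightarrow> pwf b \<Longrightarrow> psrc b = ptgt a \<Longrightarrow> pe dl (PComp b a) (PComp b a')"
  by (rule pe_comp) (auto intro: pe_refl)
lemma pe_addL: "pe dl a a' \<Longrightarrow> pwf b \<Longrightarrow> psrc a = psrc b \<Longrightarrow> ptgt a = ptgt b \<Longrightarrow> pe dl (PAdd a b) (PAdd a' b)"
  by (rule pe_add) (auto intro: pe_refl)
lemma pe_addR: "pe dl b b' \<Longrightarrow> pwf a \<Longrightarrow> psrc a = psrc b \<Longrightarrow> ptgt a = ptgt b \<Longrightarrow> pe dl (PAdd a b) (PAdd a b')"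
  by (rule pe_add) (auto intro: pe_refl)

lemma ax_add_assoc: "pwf a \<Longrightarrow> pwf b \<Longrightarrow> pwf c \<Longrightarrow> psrc b = psrc a \<Longrightarrow> ptgt b = ptgt a \<Longrightarrow>
   psrc c = psrc a \<Longrightarrow> ptgt c = ptgt a \<Longrightarrow> pe dl (PAdd (PAdd a b) c) (PAdd a (PAdd b c))"
  by (rule peI) (auto intro!: peq.add_assoc simp: ptyp_def)
lemma ax_add_comm: "pwf a \<Longrightarrow> pwf b \<Longrightarrow> psrc b = psrc a \<Longrightarrow> ptgt b = ptgt a \<Longrightarrow>
   pe dl (PAdd a b) (PAdd b a)"
  by (rule peI) (auto intro!: peq.add_comm simp: ptyp_def)
lemma ax_add_zero: "pwf a \<Longrightarrow> r = psrc a \<Longrightarrow> s = ptgt a \<Longrightarrow> pe dl (PAdd a (PZero r s)) a"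
  by (rule peI) (auto intro!: peq.add_zero simp: ptyp_def)
lemma ax_add_neg: "pwf a \<Longrightarrow> r = psrc a \<Longrightarrow> s = ptgt a \<Longrightarrow> pe dl (PAdd a (PSmul (-1) a)) (PZero r s)"
  by (rule peI) (auto intro!: peq.add_neg simp: ptyp_def)
lemma ax_smul_add_l: "pwf a \<Longrightarrow> pe dl (PSmul (c + c') a) (PAdd (PSmul c a) (PSmul c' a))"
  by (rule peI) (auto intro!: peq.smul_add_l simp: ptyp_def)
lemma ax_smul_add_r: "pwf a \<Longrightarrow> pwf b \<Longrightarrow> psrc b = psrc a \<Longrightarrow> ptgt b = ptgt a \<Longrightarrow>
   pe dl (PSmul c (PAdd a b)) (PAdd (PSmul c a) (PSmul c b))"
  by (rule peI) (auto intro!: peq.smul_add_r simp: ptyp_def)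
lemma ax_smul_smul: "pwf a \<Longrightarrow> pe dl (PSmul c (PSmul c' a)) (PSmul (c * c') a)"
  by (rule peI) (auto intro!: peq.smul_smul simp: ptyp_def)
lemma ax_smul_one: "pwf a \<Longrightarrow> pe dl (PSmul 1 a) a"
  by (rule peI) (auto intro!: peq.smul_one simp: ptyp_def)
lemma ax_comp_assoc: "pwf a \<Longrightarrow> pwf b \<Longrightarrow> pwf c \<Longrightarrow> psrc b = ptgt a \<Longrightarrow> psrc c = ptgt b \<Longrightarrow>
   pe dl (PComp c (PComp b a)) (PComp (PComp c b) a)"
  by (rule peI) (auto intro!: peq.comp_assoc simp: ptyp_def)
lemma ax_id_left: "pwf a \<Longrightarrow> n = ptgt a \<Longrightarrow> pe dl (PComp (idt n) a) a"
  apply (rule peI) using peq.id_left[of a "psrc a" "ptgt a" dl] by (auto simp: ptyp_def idt_def)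
lemma ax_id_right: "pwf a \<Longrightarrow> n = psrc a \<Longrightarrow> pe dl (PComp a (idt n)) a"
  apply (rule peI) using peq.id_right[of a "psrc a" "ptgt a" dl] by (auto simp: ptyp_def idt_def)
lemma ax_comp_add_l: "pwf a \<Longrightarrow> pwf b \<Longrightarrow> pwf b' \<Longrightarrow> psrc b = ptgt a \<Longrightarrow> psrc b' = ptgt a \<Longrightarrow> ptgt b' = ptgt b \<Longrightarrow>
   pe dl (PComp (PAdd b b') a) (PAdd (PComp b a) (PComp b' a))"
  by (rule peI) (auto intro!: peq.comp_add_l simp: ptyp_def)
lemma ax_comp_add_r: "pwf a \<Longrightarrow> pwf a' \<Longrightarrow> pwf b \<Longrightarrow> psrc b = ptgt a \<Longrightarrow> psrc a' = psrc a \<Longrightarrow> ptgt a' = ptgt a \<Longrightarrow>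
   pe dl (PComp b (PAdd a a')) (PAdd (PComp b a) (PComp b a'))"
  by (rule peI) (auto intro!: peq.comp_add_r simp: ptyp_def)
lemma ax_comp_smul_l: "pwf a \<Longrightarrow> pwf b \<Longrightarrow> psrc b = ptgt a \<Longrightarrow>
   pe dl (PComp (PSmul c b) a) (PSmul c (PComp b a))"
  by (rule peI) (auto intro!: peq.comp_smul_l simp: ptyp_def)
lemma ax_comp_smul_r: "pwf a \<Longrightarrow> pwf b \<Longrightarrow> psrc b = ptgt a \<Longrightarrow>
   pe dl (PComp b (PSmul c a)) (PSmul c (PComp b a))"
  by (rule peI) (auto intro!: peq.comp_smul_r simp: ptyp_def)
lemma ax_tens_add: "pwf a \<Longrightarrow> pwf b \<Longrightarrow> psrc b = psrc a \<Longrightarrow> ptgt b = ptgt a \<Longrightarrow> is_bdiag d \<Longrightarrow>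
   pe dl (PTens (PAdd a b) d) (PAdd (PTens a d) (PTens b d))"
  by (rule peI) (auto intro!: peq.tens_add simp: ptyp_def)
lemma ax_tens_smul: "pwf a \<Longrightarrow> is_bdiag d \<Longrightarrow> pe dl (PTens (PSmul c a) d) (PSmul c (PTens a d))"
  by (rule peI) (auto intro!: peq.tens_smul simp: ptyp_def)
lemma ax_tens_tens: "pwf a \<Longrightarrow> is_bdiag d \<Longrightarrow> is_bdiag e \<Longrightarrow> is_bdiag (btens d e) \<Longrightarrow>
   pe dl (PTens (PTens a d) e) (PTens a (btens d e))"
  by (rule peI) (auto intro!: peq.tens_tens simp: ptyp_def)
lemma ax_tens_unit: "pwf a \<Longrightarrow> pe dl (PTens a (bid 0)) a"
  by (rule peI) (auto intro!: peq.tens_unit simp: ptyp_def)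
lemma ax_interchange: "pwf a \<Longrightarrow> pwf b \<Longrightarrow> psrc b = ptgt a \<Longrightarrow> is_bdiag d \<Longrightarrow> is_bdiag e \<Longrightarrow> bt d = bs e \<Longrightarrow>
   bcomp e d = f \<Longrightarrow> is_bdiag f \<Longrightarrow>
   pe dl (PComp (PTens b e) (PTens a d)) (PSmul (dl ^ bloops e d) (PTens (PComp b a) f))"
  apply (rule peI)
  using peq.interchange[of a "psrc a" "ptgt a" b "ptgt b" d e dl] by (auto simp: tens_comp_def ptyp_def)
lemma ax_rel_i0: "is_bdiag A \<Longrightarrow> is_bdiag B \<Longrightarrow> bt A = bs B \<Longrightarrow> bcomp B A = f \<Longrightarrow> is_bdiag f \<Longrightarrow>
   pe dl (PComp (PTens PId0 B) (PTens PId0 A)) (PSmul (dl ^ bloops B A) (PTens PId0 f))"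
  apply (rule peI)
  using peq.rel_i0[of A B dl] by (auto simp: tens_comp_def)
lemma ax_rel_i1: "is_bdiag A \<Longrightarrow> is_bdiag B \<Longrightarrow> bt A = bs B \<Longrightarrow> bcomp B A = f \<Longrightarrow> is_bdiag f \<Longrightarrow>
   pe dl (PComp (PTens PH B) (PTens (idt 1) A)) (PSmul (dl ^ bloops B A) (PTens PH f))"
  apply (rule peI)
  using peq.rel_i1[of A B dl] by (auto simp: tens_comp_def idt_def)
lemma ax_rel_i2: "is_bdiag A \<Longrightarrow> is_bdiag B \<Longrightarrow> bt A = bs B \<Longrightarrow> bcomp B A = f \<Longrightarrow> is_bdiag f \<Longrightarrow>
   pe dl (PComp (PTens (idt 1) B) (PTens PH A)) (PSmul (dl ^ bloops B A) (PTens PH f))"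
  apply (rule peI)
  using peq.rel_i2[of A B dl] by (auto simp: tens_comp_def idt_def)


lemma cl_append: "cwf (xs @ ys) \<Longrightarrow> xs \<noteq> [] \<Longrightarrow> ys \<noteq> [] \<Longrightarrow> pe dl (cl (xs @ ys)) (PComp (cl xs) (cl ys))"
proof (induction xs rule: cwf.induct)
  case 1 then show ?case by simp
next
  case (2 a) then show ?case using cwf_props[of ys] by (auto simp: cl_Cons cwf_Cons intro!: pe_refl)
next
  case (3 a b l)
  have w: "cwf ((b # l) @ ys)" "pwf a" "psrc a = ptgt (hd ((b # l) @ ys))" using "3.prems" by auto
  have ih: "pe dl (cl ((b # l) @ ys)) (PComp (cl (b # l)) (cl ys))" using 3 w by simp
  have c1: "cwf (b # l)" "cwf ys" "psrc (last (b # l)) = ptgt (hd ys)" using w(1) cwf_append[of "b # l" ys] "3.prems" by auto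
  have "cl ((a # b # l) @ ys) = PComp a (cl ((b # l) @ ys))" by simp
  also have "pe dl \<dots> (PComp a (PComp (cl (b # l)) (cl ys)))"
    using ih w cwf_props[OF w(1)] by (intro pe_compR) auto
  also have "pe dl \<dots> (PComp (PComp a (cl (b # l))) (cl ys))"
    using c1 w cwf_props[OF c1(1)] cwf_props[OF c1(2)] by (intro ax_comp_assoc) auto
  finally show ?case by simp
qed

lemma cwf_appendD: "cwf (xs @ ys) \<Longrightarrow> xs \<noteq> [] \<Longrightarrow> ys \<noteq> [] \<Longrightarrow> cwf xs \<and> cwf ys \<and> psrc (cl xs) = ptgt (cl ys)"
  using cwf_append[of xs ys] cwf_props[of xs] cwf_props[of ys] by auto

lemma rw_post: "pe dl (cl seg) (cl seg') \<Longrightarrow> seg \<noteq> [] \<Longrightarrow> seg' \<noteq> [] \<Longrightarrow> cwf (seg @ post) \<Longrightarrow> cwf (seg' @ post) \<Longrightarrow>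
  pe dl (cl (seg @ post)) (cl (seg' @ post))"
proof (cases "post = []")
  case True then show "pe dl (cl seg) (cl seg') \<Longrightarrow> ?thesis" by simp
next
  case False
  assume e: "pe dl (cl seg) (cl seg')" and ne: "seg \<noteq> []" "seg' \<noteq> []" and w: "cwf (seg @ post)" "cwf (seg' @ post)"
  have "pe dl (cl (seg @ post)) (PComp (cl seg) (cl post))" using cl_append[OF w(1) ne(1) False] .
  also have "pe dl \<dots> (PComp (cl seg') (cl post))"
    using cwf_appendD[OF w(1) ne(1) False] cwf_props by (intro pe_compL[OF e]) auto
  also have "pe dl \<dots> (cl (seg' @ post))" using cl_append[OF w(2) ne(2) False] by (rule pe_sym)
  finally show ?thesis .
qed

lemma rw_pre: "pe dl (cl xs) (cl ys) \<Longrightarrow> xs \<noteq> [] \<Longrightarrow> ys \<noteq> [] \<Longrightarrow> cwf (pre @ xs) \<Longrightarrow> cwf (pre @ ys) \<Longrightarrow>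
  pe dl (cl (pre @ xs)) (cl (pre @ ys))"
proof (induction pre)
  case Nil then show ?case by simp
next
  case (Cons a pre)
  have w1: "cwf (pre @ xs)" "cwf (pre @ ys)" using Cons.prems by (auto simp: cwf_Cons)
  have ih: "pe dl (cl (pre @ xs)) (cl (pre @ ys))" using Cons w1 by simp
  show ?case using Cons.prems cwf_props[OF w1(1)] by (auto simp: cl_Cons cwf_Cons intro!: pe_compR[OF ih])
qed

lemma rw: "pe dl (cl seg) (cl seg') \<Longrightarrow> seg \<noteq> [] \<Longrightarrow> seg' \<noteq> [] \<Longrightarrow> cwf (pre @ seg @ post) \<Longrightarrow> cwf (pre @ seg' @ post) \<Longrightarrow>
  pe dl (cl (pre @ seg @ post)) (cl (pre @ seg' @ post))"
proof -
  assume a: "pe dl (cl seg) (cl seg')" "seg \<noteq> []" "seg' \<noteq> []" "cwf (pre @ seg @ post)" "cwf (pre @ seg' @ post)"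
  have w: "cwf (seg @ post)" "cwf (seg' @ post)"
  proof -
    show "cwf (seg @ post)"
    proof (cases pre)
      case Nil then show ?thesis using a by simp
    next
      case (Cons x xs) then show ?thesis using a(4) cwf_appendD[of pre "seg @ post"] a(2) by auto
    qed
    show "cwf (seg' @ post)"
    proof (cases pre)
      case Nil then show ?thesis using a by simp
    next
      case (Cons x xs) then show ?thesis using a(5) cwf_appendD[of pre "seg' @ post"] a(3) by auto
    qed
  qed
  show ?thesis using rw_pre[OF rw_post[OF a(1-3) w]] a by simp
qed

lemma cl_smul: "cwf (pre @ [a] @ post) \<Longrightarrow> pe dl (cl (pre @ [PSmul c a] @ post)) (PSmul c (cl (pre @ [a] @ post)))"
proof (induction pre)
  case Nil
  show ?case
  proof (cases "post = []")
    case True then show ?thesis using Nil by (auto intro: pe_refl)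
  next
    case False then show ?thesis using Nil cwf_props[of post]
      by (auto simp: cl_Cons cwf_Cons intro!: ax_comp_smul_l)
  qed
next
  case (Cons b pre)
  have w1: "cwf (pre @ [a] @ post)" using Cons.prems by (auto simp: cwf_Cons)
  have "pe dl (cl ((b # pre) @ [PSmul c a] @ post)) (PComp b (PSmul c (cl (pre @ [a] @ post))))"
    using Cons.IH[OF w1] Cons.prems cwf_props[OF w1] cwf_subst1[OF w1, of "PSmul c a"] cwf_all[OF w1, of a]
    by (auto simp: cl_Cons cwf_Cons intro!: pe_compR)
  also have "pe dl \<dots> (PSmul c (PComp b (cl (pre @ [a] @ post))))"
    using Cons.prems cwf_props[OF w1] by (auto simp: cwf_Cons intro!: ax_comp_smul_r)

  finally show ?case by (simp add: cl_Cons)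
qed

lemma cl_add: "cwf (pre @ [a] @ post) \<Longrightarrow> pwf b \<Longrightarrow> psrc b = psrc a \<Longrightarrow> ptgt b = ptgt a \<Longrightarrow>
  pe dl (cl (pre @ [PAdd a b] @ post)) (PAdd (cl (pre @ [a] @ post)) (cl (pre @ [b] @ post)))"
proof (induction pre)
  case Nil
  show ?case
  proof (cases "post = []")
    case True then show ?thesis using Nil by (auto intro: pe_refl)
  next
    case False then show ?thesis using Nil cwf_props[of post]
      by (auto simp: cl_Cons cwf_Cons intro!: ax_comp_add_l)
  qed
next
  case (Cons x pre)
  have w1: "cwf (pre @ [a] @ post)" using Cons.prems by (auto simp: cwf_Cons)
  have w2: "cwf (pre @ [b] @ post)" using cwf_subst1[OF w1] Cons.prems by simp
  have "pe dl (cl ((x # pre) @ [PAdd a b] @ post)) (PComp x (PAdd (cl (pre @ [a] @ post)) (cl (pre @ [b] @ post))))"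
    using Cons.IH[OF w1] Cons.prems cwf_props[OF w1] cwf_subst1[OF w1, of "PAdd a b"] cwf_all[OF w1, of a]
    by (auto simp: cl_Cons cwf_Cons intro!: pe_compR)
  also have "pe dl \<dots> (PAdd (PComp x (cl (pre @ [a] @ post))) (PComp x (cl (pre @ [b] @ post))))"
    using Cons.prems cwf_props[OF w1] cwf_props[OF w2] cwf_subst1[OF w1, of b]
    by (auto simp: cwf_Cons intro!: ax_comp_add_r)
  finally show ?case by (simp add: cl_Cons)
qed

end

definition "XI = btens bX (bid 1)"
definition "IX = btens (bid 1) bX"
definition "IXI = btens (bid 1) XI"
definition "capI = btens bcap (bid 1)"
definition "cupI = btens bcup (bid 1)"
definition "capII = btens capI (bid 1)"
definition "cupII = btens cupI (bid 1)"
definition "Icap = btens (bid 1) bcap"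
definition "Icup = btens (bid 1) bcup"
definition "IIcup = btens (bid 1) Icup"
definition "Ud = mkd 2 2 [((False,0),(False,1)), ((True,0),(True,1))]"
definition "UdI = btens Ud (bid 1)"
definition "C4 = mkd 0 4 [((True,0),(True,1)), ((True,2),(True,3))]"
definition "Kd = mkd 4 2 [((False,0),(False,2)), ((False,1),(True,0)), ((False,3),(True,1))]"
definition "K4 = mkd 4 0 [((False,0),(False,1)), ((False,2),(False,3))]"
definition "K4' = mkd 4 0 [((False,0),(False,2)), ((False,1),(False,3))]"
definition "Gd = mkd 3 1 [((False,0),(False,2)), ((False,1),(True,0))]"
definition "IG = btens (bid 1) Gd"
definition "D2 = mkd 1 3 [((False,0),(True,1)), ((True,0),(True,2))]"
definition "D3 = mkd 3 1 [((False,0),(False,1)), ((False,2),(True,0))]"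

lemmas cdefs = XI_def IX_def IXI_def capI_def cupI_def capII_def cupII_def Icap_def Icup_def IIcup_def
  Ud_def UdI_def C4_def Kd_def K4_def K4'_def Gd_def IG_def D2_def D3_def

lemma bsbt[simp]:
  "bs XI = 3" "bt XI = 3" "bs IX = 3" "bt IX = 3" "bs IXI = 4" "bt IXI = 4"
  "bs capI = 3" "bt capI = 1" "bs cupI = 1" "bt cupI = 3" "bs capII = 4" "bt capII = 2"
  "bs cupII = 2" "bt cupII = 4" "bs Icap = 3" "bt Icap = 1" "bs Icup = 1" "bt Icup = 3"
  "bs IIcup = 2" "bt IIcup = 4" "bs Ud = 2" "bt Ud = 2" "bs UdI = 3" "bt UdI = 3"
  "bs C4 = 0" "bt C4 = 4" "bs Kd = 4" "bt Kd = 2" "bs K4 = 4" "bt K4 = 0" "bs K4' = 4" "bt K4' = 0"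
  "bs Gd = 3" "bt Gd = 1" "bs IG = 4" "bt IG = 2" "bs D2 = 1" "bt D2 = 3" "bs D3 = 3" "bt D3 = 1"
  by (simp_all add: cdefs)


lemma bd_bX[simp]: "is_bdiag bX"
  apply (rule is_bdiag_list)
  apply (simp add: fixinvs cdefs)
  apply (simp add: cdefs)
  apply (code_simp)?
  done

lemma bd_bcap[simp]: "is_bdiag bcap"
  apply (rule is_bdiag_list)
  apply (simp add: fixinvs cdefs)
  apply (simp add: cdefs)
  apply (code_simp)?
  done

lemma bd_bcup[simp]: "is_bdiag bcup"
  apply (rule is_bdiag_list)
  apply (simp add: fixinvs cdefs)
  apply (simp add: cdefs)
  apply (code_simp)?
  done

lemma bd_XI[simp]: "is_bdiag XI"
  apply (rule is_bdiag_list)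
  apply (simp add: fixinvs cdefs)
  apply (simp add: cdefs)
  apply (code_simp)?
  done

lemma bd_IX[simp]: "is_bdiag IX"
  apply (rule is_bdiag_list)
  apply (simp add: fixinvs cdefs)
  apply (simp add: cdefs)
  apply (code_simp)?
  done

lemma bd_IXI[simp]: "is_bdiag IXI"
  apply (rule is_bdiag_list)
  apply (simp add: fixinvs cdefs)
  apply (simp add: cdefs)
  apply (code_simp)?
  done

lemma bd_capI[simp]: "is_bdiag capI"
  apply (rule is_bdiag_list)
  apply (simp add: fixinvs cdefs)
  apply (simp add: cdefs)
  apply (code_simp)?
  done

lemma bd_cupI[simp]: "is_bdiag cupI"
  apply (rule is_bdiag_list)
  apply (simp add: fixinvs cdefs)
  apply (simp add: cdefs)
  apply (code_simp)?
  done

lemma bd_capII[simp]: "is_bdiag capII"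
  apply (rule is_bdiag_list)
  apply (simp add: fixinvs cdefs)
  apply (simp add: cdefs)
  apply (code_simp)?
  done

lemma bd_cupII[simp]: "is_bdiag cupII"
  apply (rule is_bdiag_list)
  apply (simp add: fixinvs cdefs)
  apply (simp add: cdefs)
  apply (code_simp)?
  done

lemma bd_Icap[simp]: "is_bdiag Icap"
  apply (rule is_bdiag_list)
  apply (simp add: fixinvs cdefs)
  apply (simp add: cdefs)
  apply (code_simp)?
  done

lemma bd_Icup[simp]: "is_bdiag Icup"
  apply (rule is_bdiag_list)
  apply (simp add: fixinvs cdefs)
  apply (simp add: cdefs)
  apply (code_simp)?
  done

lemma bd_IIcup[simp]: "is_bdiag IIcup"
  apply (rule is_bdiag_list)
  apply (simp add: fixinvs cdefs)
  apply (simp add: cdefs)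
  apply (code_simp)?
  done

lemma bd_Ud[simp]: "is_bdiag Ud"
  apply (rule is_bdiag_list)
  apply (simp add: fixinvs cdefs)
  apply (simp add: cdefs)
  apply (code_simp)?
  done

lemma bd_UdI[simp]: "is_bdiag UdI"
  apply (rule is_bdiag_list)
  apply (simp add: fixinvs cdefs)
  apply (simp add: cdefs)
  apply (code_simp)?
  done

lemma bd_C4[simp]: "is_bdiag C4"
  apply (rule is_bdiag_list)
  apply (simp add: fixinvs cdefs)
  apply (simp add: cdefs)
  apply (code_simp)?
  done

lemma bd_Kd[simp]: "is_bdiag Kd"
  apply (rule is_bdiag_list)
  apply (simp add: fixinvs cdefs)
  apply (simp add: cdefs)
  apply (code_simp)?
  done

lemma bd_K4[simp]: "is_bdiag K4"
  apply (rule is_bdiag_list)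
  apply (simp add: fixinvs cdefs)
  apply (simp add: cdefs)
  apply (code_simp)?
  done

lemma bd_K4p[simp]: "is_bdiag K4'"
  apply (rule is_bdiag_list)
  apply (simp add: fixinvs cdefs)
  apply (simp add: cdefs)
  apply (code_simp)?
  done

lemma bd_Gd[simp]: "is_bdiag Gd"
  apply (rule is_bdiag_list)
  apply (simp add: fixinvs cdefs)
  apply (simp add: cdefs)
  apply (code_simp)?
  done

lemma bd_IG[simp]: "is_bdiag IG"
  apply (rule is_bdiag_list)
  apply (simp add: fixinvs cdefs)
  apply (simp add: cdefs)
  apply (code_simp)?
  done

lemma bd_D2[simp]: "is_bdiag D2"
  apply (rule is_bdiag_list)
  apply (simp add: fixinvs cdefs)
  apply (simp add: cdefs)
  apply (code_simp)?
  done

lemma bd_D3[simp]: "is_bdiag D3"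
  apply (rule is_bdiag_list)
  apply (simp add: fixinvs cdefs)
  apply (simp add: cdefs)
  apply (code_simp)?
  done

lemma c1: "bcomp bX bX = bid 2"
  apply (rule bcomp_eqI2)
  apply (simp add: phe cdefs del: set_map set_filter)
  apply code_simp
  apply (simp_all add: fixinvs cdefs)
  apply code_simp
  done

lemma c1l: "bloops bX bX = 0"
  apply (rule bloops_zero2)
  apply (simp add: phe cdefs del: set_map set_filter)
  apply (simp add: cdefs)
  apply (code_simp)?
  done

lemma c2: "bcomp bX bcup = bcup"
  apply (rule bcomp_eqI2)
  apply (simp add: phe cdefs del: set_map set_filter)
  apply code_simp
  apply (simp_all add: fixinvs cdefs)
  apply code_simp
  done

lemma c2l: "bloops bX bcup = 0"
  apply (rule bloops_zero2)
  apply (simp add: phe cdefs del: set_map set_filter)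
  apply (simp add: cdefs)
  apply (code_simp)?
  done

lemma c3: "bcomp bcap bX = bcap"
  apply (rule bcomp_eqI2)
  apply (simp add: phe cdefs del: set_map set_filter)
  apply code_simp
  apply (simp_all add: fixinvs cdefs)
  apply code_simp
  done

lemma c3l: "bloops bcap bX = 0"
  apply (rule bloops_zero2)
  apply (simp add: phe cdefs del: set_map set_filter)
  apply (simp add: cdefs)
  apply (code_simp)?
  done

lemma c4: "bcomp bcup bcap = Ud"
  apply (rule bcomp_eqI2)
  apply (simp add: phe cdefs del: set_map set_filter)
  apply code_simp
  apply (simp_all add: fixinvs cdefs)
  apply code_simp
  done

lemma c4l: "bloops bcup bcap = 0"
  apply (rule bloops_zero2)
  apply (simp add: phe cdefs del: set_map set_filter)
  apply (simp add: cdefs)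
  apply (code_simp)?
  done

lemma c5: "bcomp cupII bcup = C4"
  apply (rule bcomp_eqI2)
  apply (simp add: phe cdefs del: set_map set_filter)
  apply code_simp
  apply (simp_all add: fixinvs cdefs)
  apply code_simp
  done

lemma c5l: "bloops cupII bcup = 0"
  apply (rule bloops_zero2)
  apply (simp add: phe cdefs del: set_map set_filter)
  apply (simp add: cdefs)
  apply (code_simp)?
  done

lemma c6: "bcomp capII IXI = Kd"
  apply (rule bcomp_eqI2)
  apply (simp add: phe cdefs del: set_map set_filter)
  apply code_simp
  apply (simp_all add: fixinvs cdefs)
  apply code_simp
  done

lemma c6l: "bloops capII IXI = 0"
  apply (rule bloops_zero2)
  apply (simp add: phe cdefs del: set_map set_filter)
  apply (simp add: cdefs)
  apply (code_simp)?
  done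

lemma c7: "bcomp IIcup bcup = C4"
  apply (rule bcomp_eqI2)
  apply (simp add: phe cdefs del: set_map set_filter)
  apply code_simp
  apply (simp_all add: fixinvs cdefs)
  apply code_simp
  done

lemma c7l: "bloops IIcup bcup = 0"
  apply (rule bloops_zero2)
  apply (simp add: phe cdefs del: set_map set_filter)
  apply (simp add: cdefs)
  apply (code_simp)?
  done

lemma c8: "bcomp Kd IIcup = bX"
  apply (rule bcomp_eqI2)
  apply (simp add: phe cdefs del: set_map set_filter)
  apply code_simp
  apply (simp_all add: fixinvs cdefs)
  apply code_simp
  done

lemma c8l: "bloops Kd IIcup = 0"
  apply (rule bloops_zero2)
  apply (simp add: phe cdefs del: set_map set_filter)
  apply (simp add: cdefs)
  apply (code_simp)?
  done

lemma c9: "bcomp bcap capII = K4"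
  apply (rule bcomp_eqI2)
  apply (simp add: phe cdefs del: set_map set_filter)
  apply code_simp
  apply (simp_all add: fixinvs cdefs)
  apply code_simp
  done

lemma c9l: "bloops bcap capII = 0"
  apply (rule bloops_zero2)
  apply (simp add: phe cdefs del: set_map set_filter)
  apply (simp add: cdefs)
  apply (code_simp)?
  done

lemma c10: "bcomp K4 IXI = K4'"
  apply (rule bcomp_eqI2)
  apply (simp add: phe cdefs del: set_map set_filter)
  apply code_simp
  apply (simp_all add: fixinvs cdefs)
  apply code_simp
  done

lemma c10l: "bloops K4 IXI = 0"
  apply (rule bloops_zero2)
  apply (simp add: phe cdefs del: set_map set_filter)
  apply (simp add: cdefs)
  apply (code_simp)?
  done

lemma c11: "bcomp bcap IG = K4'"
  apply (rule bcomp_eqI2)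
  apply (simp add: phe cdefs del: set_map set_filter)
  apply code_simp
  apply (simp_all add: fixinvs cdefs)
  apply code_simp
  done

lemma c11l: "bloops bcap IG = 0"
  apply (rule bloops_zero2)
  apply (simp add: phe cdefs del: set_map set_filter)
  apply (simp add: cdefs)
  apply (code_simp)?
  done

lemma c12: "bcomp IG cupII = bX"
  apply (rule bcomp_eqI2)
  apply (simp add: phe cdefs del: set_map set_filter)
  apply code_simp
  apply (simp_all add: fixinvs cdefs)
  apply code_simp
  done

lemma c12l: "bloops IG cupII = 0"
  apply (rule bloops_zero2)
  apply (simp add: phe cdefs del: set_map set_filter)
  apply (simp add: cdefs)
  apply (code_simp)?
  done

lemma c13: "bcomp Ud bcup = bcup"
  apply (rule bcomp_eqI2)
  apply (simp add: phe cdefs del: set_map set_filter)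
  apply code_simp
  apply (simp_all add: fixinvs cdefs)
  apply code_simp
  done

lemma c14: "bcomp Icap XI = Gd"
  apply (rule bcomp_eqI2)
  apply (simp add: phe cdefs del: set_map set_filter)
  apply code_simp
  apply (simp_all add: fixinvs cdefs)
  apply code_simp
  done

lemma c14l: "bloops Icap XI = 0"
  apply (rule bloops_zero2)
  apply (simp add: phe cdefs del: set_map set_filter)
  apply (simp add: cdefs)
  apply (code_simp)?
  done

lemma c15: "bcomp Gd Icup = bid 1"
  apply (rule bcomp_eqI2)
  apply (simp add: phe cdefs del: set_map set_filter)
  apply code_simp
  apply (simp_all add: fixinvs cdefs)
  apply code_simp
  done

lemma c15l: "bloops Gd Icup = 0"
  apply (rule bloops_zero2)
  apply (simp add: phe cdefs del: set_map set_filter)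
  apply (simp add: cdefs)
  apply (code_simp)?
  done

lemma c16: "bcomp Icap UdI = D3"
  apply (rule bcomp_eqI2)
  apply (simp add: phe cdefs del: set_map set_filter)
  apply code_simp
  apply (simp_all add: fixinvs cdefs)
  apply code_simp
  done

lemma c16l: "bloops Icap UdI = 0"
  apply (rule bloops_zero2)
  apply (simp add: phe cdefs del: set_map set_filter)
  apply (simp add: cdefs)
  apply (code_simp)?
  done

lemma c16b: "bcomp D3 Icup = bid 1"
  apply (rule bcomp_eqI2)
  apply (simp add: phe cdefs del: set_map set_filter)
  apply code_simp
  apply (simp_all add: fixinvs cdefs)
  apply code_simp
  done

lemma c16bl: "bloops D3 Icup = 0"
  apply (rule bloops_zero2)
  apply (simp add: phe cdefs del: set_map set_filter)
  apply (simp add: cdefs)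
  apply (code_simp)?
  done

lemma c17: "bcomp Icap Icup = bid 1"
  apply (rule bcomp_eqI2)
  apply (simp add: phe cdefs del: set_map set_filter)
  apply code_simp
  apply (simp_all add: fixinvs cdefs)
  apply code_simp
  done

lemma c18: "bcomp capI IX = Gd"
  apply (rule bcomp_eqI2)
  apply (simp add: phe cdefs del: set_map set_filter)
  apply code_simp
  apply (simp_all add: fixinvs cdefs)
  apply code_simp
  done

lemma c18l: "bloops capI IX = 0"
  apply (rule bloops_zero2)
  apply (simp add: phe cdefs del: set_map set_filter)
  apply (simp add: cdefs)
  apply (code_simp)?
  done

lemma c19: "bcomp XI Icup = D2"
  apply (rule bcomp_eqI2)
  apply (simp add: phe cdefs del: set_map set_filter)
  apply code_simp
  apply (simp_all add: fixinvs cdefs)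
  apply code_simp
  done

lemma c19l: "bloops XI Icup = 0"
  apply (rule bloops_zero2)
  apply (simp add: phe cdefs del: set_map set_filter)
  apply (simp add: cdefs)
  apply (code_simp)?
  done

lemma c20: "bcomp IX D2 = cupI"
  apply (rule bcomp_eqI2)
  apply (simp add: phe cdefs del: set_map set_filter)
  apply code_simp
  apply (simp_all add: fixinvs cdefs)
  apply code_simp
  done

lemma c20l: "bloops IX D2 = 0"
  apply (rule bloops_zero2)
  apply (simp add: phe cdefs del: set_map set_filter)
  apply (simp add: cdefs)
  apply (code_simp)?
  done

lemma c21: "bcomp XI XI = bid 3"
  apply (rule bcomp_eqI2)
  apply (simp add: phe cdefs del: set_map set_filter)
  apply code_simp
  apply (simp_all add: fixinvs cdefs)
  apply code_simp
  done

lemma c21l: "bloops XI XI = 0"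
  apply (rule bloops_zero2)
  apply (simp add: phe cdefs del: set_map set_filter)
  apply (simp add: cdefs)
  apply (code_simp)?
  done

lemma c22: "bcomp bcap bcup = bid 0"
  apply (rule bcomp_eqI2)
  apply (simp add: phe cdefs del: set_map set_filter)
  apply code_simp
  apply (simp_all add: fixinvs cdefs)
  apply code_simp
  done

lemma bconn_RLE: "edges d e = E \<Longrightarrow> set (stepl E (RLE E x)) \<subseteq> set (RLE E x) \<Longrightarrow>
  bconn d e x y \<longleftrightarrow> y \<in> set (RLE E x)"
  using bconn_RL[of e d x y] by (simp add: closedR_def RL_def RLE_def)

lemma c13l: "bloops Ud bcup = 1"
proof -
  have E: "edges bcup Ud = [((Suc 0, 0), Suc 0, Suc 0), ((Suc 0, Suc 0), Suc 0, 0),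
      ((Suc 0, 0), Suc 0, Suc 0), ((Suc 0, Suc 0), Suc 0, 0),
      ((2, 0), 2, Suc 0), ((2, Suc 0), 2, 0)]" (is "_ = ?E")
    by (simp add: phe cdefs del: set_map set_filter)
  have r0: "set (RLE ?E (1,0)) = {(1,0),(1,1)}" by code_simp
  have r1: "set (RLE ?E (1,1)) = {(1,0),(1,1)}" by code_simp
  have cl0: "set (stepl ?E (RLE ?E (1,0))) \<subseteq> set (RLE ?E (1,0))" by code_simp
  have cl1: "set (stepl ?E (RLE ?E (1,1))) \<subseteq> set (RLE ?E (1,1))" by code_simp
  have b0: "bconn bcup Ud (1,0) y \<longleftrightarrow> y \<in> {(1,0),(1,1)}" for y
    using bconn_RLE[OF E cl0] r0 by auto
  have b1: "bconn bcup Ud (1,1) y \<longleftrightarrow> y \<in> {(1,0),(1,1)}" for y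
    using bconn_RLE[OF E cl1] r1 by auto
  define Q where "Q i \<longleftrightarrow> (\<nexists>q. valid_pt (bs bcup) (bt Ud) q \<and> bconn bcup Ud (1, i) (outp q))" for i
  have Q0: "Q 0" unfolding Q_def b0 by (simp add: outp_def)
  have Q1: "Q 1" unfolding Q_def b1 by (simp add: outp_def)
  have M: "{(1::nat, i) |i. i < bt bcup \<and> Q i} = {(1,0),(1,1)}"
  proof -
    have l2: "b < 2 \<longleftrightarrow> b = 0 \<or> b = 1" for b :: nat by arith
    have "(b < 2 \<and> Q b) \<longleftrightarrow> b = 0 \<or> b = 1" for b using Q0 Q1 l2 by blast
    then show ?thesis by auto
  qed
  have S: "Collect (bconn bcup Ud (1,0)) = Collect (bconn bcup Ud (1,1))"
    unfolding set_eq_iff mem_Collect_eq b0 b1 by simp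
  have "bloops Ud bcup = card ((\<lambda>x. Collect (bconn bcup Ud x)) ` {(1::nat, i) |i. i < bt bcup \<and> Q i})"
    unfolding bloops_def Q_def by simp
  also have "\<dots> = 1" unfolding M using S by simp
  finally show ?thesis .
qed

context fixes dl :: "'k::comm_ring_1" begin

lemma smul_zero0: "pwf a \<Longrightarrow> pe dl (PSmul 0 a) (PZero (psrc a) (ptgt a))"
proof -
  assume a: "pwf a"
  let ?z = "PSmul 0 a"
  have z2: "pe dl ?z (PAdd ?z ?z)" using ax_smul_add_l[OF a, of dl 0 0] by simp
  have "pe dl (PZero (psrc a) (ptgt a)) (PAdd ?z (PSmul (-1) ?z))"
    by (rule pe_sym, rule ax_add_neg) (simp_all add: a)
  also have "pe dl \<dots> (PAdd (PAdd ?z ?z) (PSmul (-1) ?z))" by (rule pe_addL[OF z2]) (simp_all add: a)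
  also have "pe dl \<dots> (PAdd ?z (PAdd ?z (PSmul (-1) ?z)))" by (rule ax_add_assoc) (simp_all add: a)
  also have "pe dl \<dots> (PAdd ?z (PZero (psrc a) (ptgt a)))" by (rule pe_addR, rule ax_add_neg) (simp_all add: a)
  also have "pe dl \<dots> ?z" by (rule ax_add_zero) (simp_all add: a)
  finally show ?thesis by (rule pe_sym)
qed

lemma smul_zero: "pwf a \<Longrightarrow> r = psrc a \<Longrightarrow> s = ptgt a \<Longrightarrow> pe dl (PSmul 0 a) (PZero r s)"
  using smul_zero0 by simp

lemma ax_smul_smul': "pwf a \<Longrightarrow> z = c * c' \<Longrightarrow> pe dl (PSmul c (PSmul c' a)) (PSmul z a)"
  using ax_smul_smul by simp

lemma comp_zero_l: "pwf a \<Longrightarrow> s = ptgt a \<Longrightarrow> pe dl (PComp (PZero s t) a) (PZero (psrc a) t)"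
proof -
  assume a: "pwf a" "s = ptgt a"
  have "pe dl (PComp (PZero s t) a) (PComp (PSmul 0 (PZero s t)) a)"
    by (rule pe_compL, rule pe_sym, rule smul_zero) (simp_all add: a)
  also have "pe dl \<dots> (PSmul 0 (PComp (PZero s t) a))" by (rule ax_comp_smul_l) (simp_all add: a)
  also have "pe dl \<dots> (PZero (psrc a) t)" by (rule smul_zero) (simp_all add: a)
  finally show ?thesis .
qed

lemma comp_zero_r: "pwf b \<Longrightarrow> s = psrc b \<Longrightarrow> pe dl (PComp b (PZero r s)) (PZero r (ptgt b))"
proof -
  assume a: "pwf b" "s = psrc b"
  have "pe dl (PComp b (PZero r s)) (PComp b (PSmul 0 (PZero r s)))"
    by (rule pe_compR, rule pe_sym, rule smul_zero) (simp_all add: a)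
  also have "pe dl \<dots> (PSmul 0 (PComp b (PZero r s)))" by (rule ax_comp_smul_r) (simp_all add: a)
  also have "pe dl \<dots> (PZero r (ptgt b))" by (rule smul_zero) (simp_all add: a)
  finally show ?thesis .
qed

lemma smul_Zero: "pe dl (PSmul c (PZero r s)) (PZero r s)"
proof -
  have "pe dl (PSmul c (PZero r s)) (PSmul c (PSmul 0 (PZero r s)))"
    by (rule pe_smul, rule pe_sym, rule smul_zero) simp_all
  also have "pe dl \<dots> (PSmul (c * 0) (PZero r s))" by (rule ax_smul_smul) simp
  also have "pe dl \<dots> (PZero r s)" using smul_zero[of "PZero r s" r s] by simp
  finally show ?thesis .
qed

lemma eq_diff: "pe dl (PAdd a (PSmul (-1) b)) (PZero r s) \<Longrightarrow> pwf a \<Longrightarrow> pwf b \<Longrightarrow>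
  psrc b = psrc a \<Longrightarrow> ptgt b = ptgt a \<Longrightarrow> r = psrc a \<Longrightarrow> s = ptgt a \<Longrightarrow> pe dl a b"
proof -
  assume h0: "pe dl (PAdd a (PSmul (-1) b)) (PZero r s)" and a: "pwf a" "pwf b"
    "psrc b = psrc a" "ptgt b = ptgt a" "r = psrc a" "s = ptgt a"
  define z :: "'k pterm" where "z = PZero r s"
  have h: "pe dl (PAdd a (PSmul (-1) b)) z" "z = PZero (psrc a) (ptgt a)" using h0 a by (simp_all add: z_def)
  have "pe dl a (PAdd a z)" unfolding h(2) by (rule pe_sym, rule ax_add_zero) (simp_all add: a)
  also have "pe dl \<dots> (PAdd a (PAdd b (PSmul (-1) b)))"
    unfolding h(2) by (rule pe_addR, rule pe_sym, rule ax_add_neg) (simp_all add: a)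
  also have "pe dl \<dots> (PAdd a (PAdd (PSmul (-1) b) b))"
    by (rule pe_addR, rule ax_add_comm) (simp_all add: a)
  also have "pe dl \<dots> (PAdd (PAdd a (PSmul (-1) b)) b)"
    by (rule pe_sym, rule ax_add_assoc) (simp_all add: a)
  also have "pe dl \<dots> (PAdd z b)" by (rule pe_addL[OF h(1)]) (simp_all add: a)
  also have "pe dl \<dots> (PAdd b z)" by (rule ax_add_comm) (simp_all add: a h(2))
  also have "pe dl \<dots> b" unfolding h(2) by (rule ax_add_zero) (simp_all add: a)
  finally show ?thesis .
qed

lemma two_inv: "pe dl z (PSmul (-1) z) \<Longrightarrow> 2 * u = (1::'k) \<Longrightarrow> pwf z \<Longrightarrow> pe dl z (PZero (psrc z) (ptgt z))"
proof -
  assume h: "pe dl z (PSmul (-1) z)" and u: "2 * u = (1::'k)" and a: "pwf z"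
  have "pe dl (PSmul 2 z) (PAdd (PSmul 1 z) (PSmul 1 z))" using ax_smul_add_l[OF a, of dl 1 1] by simp
  also have "pe dl \<dots> (PAdd z (PSmul 1 z))" by (rule pe_addL, rule ax_smul_one) (simp_all add: a)
  also have "pe dl \<dots> (PAdd z z)" by (rule pe_addR, rule ax_smul_one) (simp_all add: a)
  also have "pe dl \<dots> (PAdd z (PSmul (-1) z))" by (rule pe_addR[OF h]) (simp_all add: a)
  also have "pe dl \<dots> (PZero (psrc z) (ptgt z))" by (rule ax_add_neg) (simp_all add: a)
  finally have z2: "pe dl (PSmul 2 z) (PZero (psrc z) (ptgt z))" .
  have "pe dl z (PSmul 1 z)" by (rule pe_sym, rule ax_smul_one) (simp add: a)
  also have "PSmul 1 z = PSmul (u * 2) z" using u by (simp add: mult.commute)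
  also have "pe dl (PSmul (u * 2) z) (PSmul u (PSmul 2 z))" by (rule pe_sym, rule ax_smul_smul) (simp add: a)
  also have "pe dl \<dots> (PSmul u (PZero (psrc z) (ptgt z)))" by (rule pe_smul[OF z2])
  also have "pe dl \<dots> (PZero (psrc z) (ptgt z))" by (rule smul_Zero)
  finally show ?thesis .
qed

definition lin2 :: "'k \<Rightarrow> 'k \<Rightarrow> 'k pterm \<Rightarrow> 'k pterm \<Rightarrow> 'k pterm" where
  "lin2 x y a b = PAdd (PSmul x a) (PSmul y b)"

lemma lin2_wf: "pwf a \<Longrightarrow> pwf b \<Longrightarrow> psrc b = psrc a \<Longrightarrow> ptgt b = ptgt a \<Longrightarrow>
  pwf (lin2 x y a b) \<and> psrc (lin2 x y a b) = psrc a \<and> ptgt (lin2 x y a b) = ptgt a"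
  by (simp add: lin2_def)

lemma add4: "pwf a \<Longrightarrow> pwf b \<Longrightarrow> pwf c \<Longrightarrow> pwf d \<Longrightarrow> psrc b = psrc a \<Longrightarrow> ptgt b = ptgt a \<Longrightarrow>
  psrc c = psrc a \<Longrightarrow> ptgt c = ptgt a \<Longrightarrow> psrc d = psrc a \<Longrightarrow> ptgt d = ptgt a \<Longrightarrow>
  pe dl (PAdd (PAdd a b) (PAdd c d)) (PAdd (PAdd a c) (PAdd b d))"
proof -
  assume w: "pwf a" "pwf b" "pwf c" "pwf d" "psrc b = psrc a" "ptgt b = ptgt a"
  "psrc c = psrc a" "ptgt c = ptgt a" "psrc d = psrc a" "ptgt d = ptgt a"
  have "pe dl (PAdd (PAdd a b) (PAdd c d)) (PAdd a (PAdd b (PAdd c d)))" by (rule ax_add_assoc) (simp_all add: w)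
  also have "pe dl \<dots> (PAdd a (PAdd (PAdd b c) d))" by (rule pe_addR, rule pe_sym, rule ax_add_assoc) (simp_all add: w)
  also have "pe dl \<dots> (PAdd a (PAdd (PAdd c b) d))" by (rule pe_addR, rule pe_addL, rule ax_add_comm) (simp_all add: w)
  also have "pe dl \<dots> (PAdd a (PAdd c (PAdd b d)))" by (rule pe_addR, rule ax_add_assoc) (simp_all add: w)
  also have "pe dl \<dots> (PAdd (PAdd a c) (PAdd b d))" by (rule pe_sym, rule ax_add_assoc) (simp_all add: w)
  finally show ?thesis .
qed

lemma lin2_add: "pwf a \<Longrightarrow> pwf b \<Longrightarrow> psrc b = psrc a \<Longrightarrow> ptgt b = ptgt a \<Longrightarrow> z = x + x' \<Longrightarrow> w = y + y' \<Longrightarrow>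
  pe dl (PAdd (lin2 x y a b) (lin2 x' y' a b)) (lin2 z w a b)"
proof -
  assume w: "pwf a" "pwf b" "psrc b = psrc a" "ptgt b = ptgt a" and e: "z = x + x'" "w = y + y'"
  have "pe dl (PAdd (lin2 x y a b) (lin2 x' y' a b)) (PAdd (PAdd (PSmul x a) (PSmul x' a)) (PAdd (PSmul y b) (PSmul y' b)))"
    unfolding lin2_def by (rule add4) (simp_all add: w)
  also have "pe dl \<dots> (lin2 z w a b)" unfolding lin2_def e
    by (rule pe_add; (rule pe_sym, rule ax_smul_add_l)?) (simp_all add: w)
  finally show ?thesis .
qed

lemma lin2_smul: "pwf a \<Longrightarrow> pwf b \<Longrightarrow> psrc b = psrc a \<Longrightarrow> ptgt b = ptgt a \<Longrightarrow> z = c * x \<Longrightarrow> w = c * y \<Longrightarrow>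
  pe dl (PSmul c (lin2 x y a b)) (lin2 z w a b)"
proof -
  assume w: "pwf a" "pwf b" "psrc b = psrc a" "ptgt b = ptgt a" and e: "z = c * x" "w = c * y"
  have "pe dl (PSmul c (lin2 x y a b)) (PAdd (PSmul c (PSmul x a)) (PSmul c (PSmul y b)))"
    unfolding lin2_def by (rule ax_smul_add_r) (simp_all add: w)
  also have "pe dl \<dots> (lin2 z w a b)" unfolding lin2_def e
    by (rule pe_add; (rule ax_smul_smul)?) (simp_all add: w)
  finally show ?thesis .
qed

lemma lin2_zero: "pwf a \<Longrightarrow> pwf b \<Longrightarrow> psrc b = psrc a \<Longrightarrow> ptgt b = ptgt a \<Longrightarrow>
  pe dl (lin2 0 0 a b) (PZero (psrc a) (ptgt a))"
proof -
  assume w: "pwf a" "pwf b" "psrc b = psrc a" "ptgt b = ptgt a"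
  have "pe dl (lin2 0 0 a b) (PAdd (PZero (psrc a) (ptgt a)) (PZero (psrc a) (ptgt a)))"
    unfolding lin2_def using w by (intro pe_add smul_zero) auto
  also have "pe dl \<dots> (PZero (psrc a) (ptgt a))" by (rule ax_add_zero) simp_all
  finally show ?thesis .
qed

lemma G3: "pe dl (lin2 (-1) (1 - dl) a b) (lin2 1 (-1) a b) \<Longrightarrow>
  pwf a \<Longrightarrow> pwf b \<Longrightarrow> psrc b = psrc a \<Longrightarrow> ptgt b = ptgt a \<Longrightarrow>
  pe dl (PSmul 2 a) (PSmul (2 - dl) b)"
proof -
  assume h: "pe dl (lin2 (-1) (1 - dl) a b) (lin2 1 (-1) a b)" and w: "pwf a" "pwf b" "psrc b = psrc a" "ptgt b = ptgt a"
  note lw = lin2_wf[OF w]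
  have "pe dl (lin2 2 (- (2 - dl)) a b) (PAdd (lin2 1 (-1) a b) (lin2 1 (-1 + dl) a b))"
    by (rule pe_sym, rule lin2_add) (simp_all add: w)
  also have "pe dl \<dots> (PAdd (lin2 1 (-1) a b) (PSmul (-1) (lin2 (-1) (1 - dl) a b)))"
    by (rule pe_addR, rule pe_sym, rule lin2_smul) (simp_all add: w lw)
  also have "pe dl \<dots> (PAdd (lin2 1 (-1) a b) (PSmul (-1) (lin2 1 (-1) a b)))"
    by (rule pe_addR, rule pe_smul[OF h]) (simp_all add: w lw)
  also have "pe dl \<dots> (PZero (psrc a) (ptgt a))" by (rule ax_add_neg) (simp_all add: w lw)
  finally have z: "pe dl (lin2 2 (- (2 - dl)) a b) (PZero (psrc a) (ptgt a))" .
  have "pe dl (PAdd (PSmul 2 a) (PSmul (-1) (PSmul (2 - dl) b))) (lin2 2 (- (2 - dl)) a b)"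
    unfolding lin2_def by (rule pe_addR, rule ax_smul_smul') (simp_all add: w)
  also note z
  finally show ?thesis by (rule eq_diff) (simp_all add: w)
qed


lemma B0n: "is_bdiag A \<Longrightarrow> is_bdiag B \<Longrightarrow> bt A = bs B \<Longrightarrow> bcomp B A = f \<Longrightarrow> is_bdiag f \<Longrightarrow>
   pe dl (PComp (PTens PId0 B) (PTens PId0 A)) (PSmul (dl ^ bloops B A) (PTens PId0 f))"
  by (rule ax_rel_i0)

lemma B0: "is_bdiag A \<Longrightarrow> is_bdiag B \<Longrightarrow> bt A = bs B \<Longrightarrow> bcomp B A = f \<Longrightarrow> bloops B A = 0 \<Longrightarrow> is_bdiag f \<Longrightarrow>
   pe dl (PComp (PTens PId0 B) (PTens PId0 A)) (PTens PId0 f)"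
  using ax_rel_i0[of A B f dl] ax_smul_one[of "PTens PId0 f" dl] pe_trans by fastforce

lemma TT: "pwf a \<Longrightarrow> is_bdiag d \<Longrightarrow> is_bdiag e \<Longrightarrow> btens d e = f \<Longrightarrow> is_bdiag f \<Longrightarrow>
   pe dl (PTens (PTens a d) e) (PTens a f)"
  using ax_tens_tens[of a d e dl] by simp

lemma B1: "is_bdiag A \<Longrightarrow> is_bdiag B \<Longrightarrow> bt A = bs B \<Longrightarrow> bcomp B A = f \<Longrightarrow> bloops B A = 0 \<Longrightarrow> is_bdiag f \<Longrightarrow>
   btens (bid 1) A = A1 \<Longrightarrow> is_bdiag A1 \<Longrightarrow>
   pe dl (PComp (PTens PH B) (PTens PId0 A1)) (PTens PH f)"
proof -
  assume h: "is_bdiag A" "is_bdiag B" "bt A = bs B" "bcomp B A = f" "bloops B A = 0" "is_bdiag f"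
    "btens (bid 1) A = A1" "is_bdiag A1"
  have "pe dl (PComp (PTens PH B) (PTens PId0 A1)) (PComp (PTens PH B) (PTens (idt 1) A))"
    unfolding idt_def by (rule pe_compR, rule pe_sym, rule TT) (use h in \<open>simp_all add: h(7)[symmetric]\<close>)
  also have "pe dl \<dots> (PSmul (dl ^ bloops B A) (PTens PH f))" by (rule ax_rel_i1) (use h in simp_all)
  also have "pe dl \<dots> (PTens PH f)" using h by (simp add: ax_smul_one)
  finally show ?thesis .
qed

lemma B2: "is_bdiag A \<Longrightarrow> is_bdiag B \<Longrightarrow> bt A = bs B \<Longrightarrow> bcomp B A = f \<Longrightarrow> bloops B A = 0 \<Longrightarrow> is_bdiag f \<Longrightarrow>
   btens (bid 1) B = B1 \<Longrightarrow> is_bdiag B1 \<Longrightarrow>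
   pe dl (PComp (PTens PId0 B1) (PTens PH A)) (PTens PH f)"
proof -
  assume h: "is_bdiag A" "is_bdiag B" "bt A = bs B" "bcomp B A = f" "bloops B A = 0" "is_bdiag f"
    "btens (bid 1) B = B1" "is_bdiag B1"
  have "pe dl (PComp (PTens PId0 B1) (PTens PH A)) (PComp (PTens (idt 1) B) (PTens PH A))"
    unfolding idt_def by (rule pe_compL, rule pe_sym, rule TT) (use h in \<open>simp_all add: h(7)[symmetric]\<close>)
  also have "pe dl \<dots> (PSmul (dl ^ bloops B A) (PTens PH f))" by (rule ax_rel_i2) (use h in simp_all)
  also have "pe dl \<dots> (PTens PH f)" using h by (simp add: ax_smul_one)
  finally show ?thesis .
qed

lemma B3: "pwf a \<Longrightarrow> pwf b \<Longrightarrow> psrc b = ptgt a \<Longrightarrow>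
   pe dl (PTens (PComp b a) (bid k)) (PComp (PTens b (bid k)) (PTens a (bid k)))"
proof -
  assume h: "pwf a" "pwf b" "psrc b = ptgt a"
  have "pe dl (PComp (PTens b (bid k)) (PTens a (bid k))) (PSmul (dl ^ bloops (bid k) (bid k)) (PTens (PComp b a) (bid k)))"
    by (rule ax_interchange) (use h bcomp_bid_bid in simp_all)
  also have "pe dl \<dots> (PTens (PComp b a) (bid k))" using h bcomp_bid_bid by (simp add: ax_smul_one)
  finally show ?thesis by (rule pe_sym)
qed

lemma cl_tens: "cwf l \<Longrightarrow> pe dl (PTens (cl l) (bid k)) (cl (map (\<lambda>x. PTens x (bid k)) l))"
proof (induction l rule: cwf.induct)
  case 1 then show ?case by simp
next
  case (2 a) then show ?case by (simp add: pe_refl)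
next
  case (3 a b l)
  have w: "pwf a" "psrc a = ptgt b" "cwf (b # l)" using "3.prems" by auto
  have "cl (map (\<lambda>x. PTens x (bid k)) (b # l)) = cl (PTens b (bid k) # map (\<lambda>x. PTens x (bid k)) l)" by simp
  have "pe dl (PTens (cl (a # b # l)) (bid k)) (PComp (PTens a (bid k)) (PTens (cl (b # l)) (bid k)))"
    using w cwf_props[OF w(3)] by (simp add: B3)
  also have "pe dl \<dots> (PComp (PTens a (bid k)) (cl (map (\<lambda>x. PTens x (bid k)) (b # l))))"
    by (rule pe_compR[OF "3.IH"[OF w(3)]]) (use w cwf_props[OF w(3)] in simp_all)
  finally show ?case by simp
qed

end

lemma ty_named[simp]:
  "pwf H01" "psrc H01 = 2" "ptgt H01 = 2"
  "pwf X0" "psrc X0 = 2" "ptgt X0 = 2"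
  "pwf H02" "psrc H02 = 2" "ptgt H02 = 2"
  "pwf PPi" "psrc PPi = 2" "ptgt PPi = 0"
  "pwf PAmalg" "psrc PAmalg = 0" "ptgt PAmalg = 2"
  "pwf (idt n)" "psrc (idt n) = n" "ptgt (idt n) = n"
  by (simp_all add: H01_def X0_def H02_def PPi_def PAmalg_def idt_def)

lemma H12_eq: "H12 dl = PAdd X0 (PSmul (-1) (PSmul 1 (PTens PId0 Ud)))"
  by (simp add: H12_def tens_comp_def c4 c4l X0_def)

lemma ty_H12[simp]: "pwf (H12 dl)" "psrc (H12 dl) = 2" "ptgt (H12 dl) = 2"
  by (simp_all add: H12_eq X0_def)

declare One_nat_def [simp del]

abbreviation Dg :: "bdiag \<Rightarrow> 'k pterm" where "Dg d \<equiv> PTens PId0 d"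

lemma tyD[simp]: "pwf (Dg d :: 'k pterm) = is_bdiag d" "psrc (Dg d :: 'k pterm) = bs d" "ptgt (Dg d :: 'k pterm) = bt d"
  by simp_all

lemma bot3: "bcomp XI (bid 3) = XI" "bloops XI (bid 3) = 0"
  using bcomp_bid_bot[of XI 3] by simp_all

lemmas fd = XI_def[symmetric] IX_def[symmetric] IXI_def[symmetric] capI_def[symmetric] cupI_def[symmetric]
  capII_def[symmetric] cupII_def[symmetric] Icap_def[symmetric] Icup_def[symmetric] IIcup_def[symmetric]
  UdI_def[symmetric] IG_def[symmetric]

context fixes dl :: "'k::comm_ring_1" begin

lemma TR: "pe dl (PTens (ptransp PH) (bid 1)) (cl [Dg capII, PTens PH XI, Dg cupII])"
proof -
  have e: "ptransp PH = cl [Dg capI, PTens PH bX, Dg cupI]"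
    by (simp add: ptransp_def capI_def cupI_def)
  have "pe dl (PTens (cl [Dg capI, PTens PH bX, Dg cupI]) (bid 1)) (cl [PTens (Dg capI) (bid 1), PTens (PTens PH bX) (bid 1), PTens (Dg cupI) (bid 1)])"
    using cl_tens[of "[Dg capI, PTens PH bX, Dg cupI]" dl 1] by simp
  then have "pe dl (PTens (ptransp PH) (bid 1)) (cl [PTens (Dg capI) (bid 1), PTens (PTens PH bX) (bid 1), PTens (Dg cupI) (bid 1)])"
    unfolding e .
  also have "pe dl \<dots> (cl [Dg capII, PTens (PTens PH bX) (bid 1), PTens (Dg cupI) (bid 1)])"
  proof -
    have f: "pe dl (PTens (Dg capI) (bid 1)) (Dg capII)" by (rule TT) (simp_all add: fd)
    show ?thesis using rw[of dl "[PTens (Dg capI) (bid 1)]" "[Dg capII]" "[]" "[PTens (PTens PH bX) (bid 1), PTens (Dg cupI) (bid 1)]"] f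
      by simp
  qed
  also have "pe dl \<dots> (cl [Dg capII, PTens PH XI, PTens (Dg cupI) (bid 1)])"
  proof -
    have f: "pe dl (PTens (PTens PH bX) (bid 1)) (PTens PH XI)" by (rule TT) (simp_all add: fd)
    show ?thesis using rw[of dl "[PTens (PTens PH bX) (bid 1)]" "[PTens PH XI]" "[Dg capII]" "[PTens (Dg cupI) (bid 1)]"] f
      by simp
  qed
  also have "pe dl \<dots> (cl [Dg capII, PTens PH XI, Dg cupII])"
  proof -
    have f: "pe dl (PTens (Dg cupI) (bid 1)) (Dg cupII)" by (rule TT) (simp_all add: fd)
    show ?thesis using rw[of dl "[PTens (Dg cupI) (bid 1)]" "[Dg cupII]" "[Dg capII, PTens PH XI]" "[]"] f
      by simp
  qed
  finally show ?thesis .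
qed

lemma XA: "pe dl (PComp X0 PAmalg) PAmalg"
  unfolding X0_def PAmalg_def by (rule B0) (simp_all add: c2 c2l)
lemma PX: "pe dl (PComp PPi X0) PPi"
  unfolding X0_def PPi_def by (rule B0) (simp_all add: c3 c3l)
lemma XX: "pe dl (PComp X0 X0) (idt 2)"
  unfolding X0_def idt_def by (rule B0) (simp_all add: c1 c1l)

lemma R3: "pe dl (ptransp PH) (PSmul (-1) PH)"
  by (rule peI[OF peq.rel_iii]) (simp_all add: ptransp_def fd)

lemma L1core: "pe dl (cl [Dg capII, PTens PH XI, Dg cupII, PAmalg]) (cl [X0, H01, PAmalg])"
proof -
  have f1: "pe dl (PComp (Dg cupII) PAmalg) (Dg C4)"
    unfolding PAmalg_def by (rule B0) (simp_all add: c5 c5l)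
  have f2: "pe dl (PTens PH XI) (PComp (Dg IXI) (PTens PH (bid 3)))"
    by (rule pe_sym, rule B2[where B=XI]) (simp_all add: bot3 fd)
  have f3: "pe dl (PComp (Dg capII) (Dg IXI)) (Dg Kd)"
    by (rule B0) (simp_all add: c6 c6l)
  have f4: "pe dl (Dg C4) (PComp (Dg IIcup) PAmalg)"
    unfolding PAmalg_def by (rule pe_sym, rule B0) (simp_all add: c7 c7l)
  have f5: "pe dl (PComp (PTens PH (bid 3)) (Dg IIcup)) (PTens PH Icup)"
    by (rule B1[where A=Icup]) (simp_all add: bcomp_bid_top fd)
  have f6: "pe dl (PTens PH Icup) (PComp (Dg IIcup) H01)"
    unfolding H01_def by (rule pe_sym, rule B2[where B=Icup]) (simp_all add: bcomp_bid_bot fd)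
  have f7: "pe dl (PComp (Dg Kd) (Dg IIcup)) X0"
    unfolding X0_def by (rule B0) (simp_all add: c8 c8l)
  have "pe dl (cl [Dg capII, PTens PH XI, Dg cupII, PAmalg]) (cl [Dg capII, PTens PH XI, Dg C4])"
    using rw[of dl "[Dg cupII, PAmalg]" "[Dg C4]" "[Dg capII, PTens PH XI]" "[]"] f1 by simp
  also have "pe dl \<dots> (cl [Dg capII, Dg IXI, PTens PH (bid 3), Dg C4])"
    using rw[of dl "[PTens PH XI]" "[Dg IXI, PTens PH (bid 3)]" "[Dg capII]" "[Dg C4]"] f2 by simp
  also have "pe dl \<dots> (cl [Dg Kd, PTens PH (bid 3), Dg C4])"
    using rw[of dl "[Dg capII, Dg IXI]" "[Dg Kd]" "[]" "[PTens PH (bid 3), Dg C4]"] f3 by simp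
  also have "pe dl \<dots> (cl [Dg Kd, PTens PH (bid 3), Dg IIcup, PAmalg])"
    using rw[of dl "[Dg C4]" "[Dg IIcup, PAmalg]" "[Dg Kd, PTens PH (bid 3)]" "[]"] f4 by simp
  also have "pe dl \<dots> (cl [Dg Kd, PTens PH Icup, PAmalg])"
    using rw[of dl "[PTens PH (bid 3), Dg IIcup]" "[PTens PH Icup]" "[Dg Kd]" "[PAmalg]"] f5 by simp
  also have "pe dl \<dots> (cl [Dg Kd, Dg IIcup, H01, PAmalg])"
    using rw[of dl "[PTens PH Icup]" "[Dg IIcup, H01]" "[Dg Kd]" "[PAmalg]"] f6 by simp
  also have "pe dl \<dots> (cl [X0, H01, PAmalg])"
    using rw[of dl "[Dg Kd, Dg IIcup]" "[X0]" "[]" "[H01, PAmalg]"] f7 by simp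
  finally show ?thesis .
qed

lemma L1: "pe dl (PComp H02 PAmalg) (PSmul (-1) (PComp H01 PAmalg))"
proof -
  have "PComp H02 PAmalg = cl [H02, PAmalg]" by simp
  also have "pe dl \<dots> (cl [X0, H01, X0, PAmalg])"
    using rw[of dl "[H02]" "[X0, H01, X0]" "[]" "[PAmalg]"] by (simp add: H02_def pe_refl)
  also have "pe dl \<dots> (cl [X0, H01, PAmalg])"
    using rw[of dl "[X0, PAmalg]" "[PAmalg]" "[X0, H01]" "[]"] XA by simp
  also have "pe dl \<dots> (cl [Dg capII, PTens PH XI, Dg cupII, PAmalg])"
    by (rule pe_sym, rule L1core)
  also have "pe dl \<dots> (PComp (cl [Dg capII, PTens PH XI, Dg cupII]) PAmalg)"
    using cl_append[of "[Dg capII, PTens PH XI, Dg cupII]" "[PAmalg]" dl] by (simp add: fd)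
  also have "pe dl \<dots> (PComp (PTens (ptransp PH) (bid 1)) PAmalg)"
    by (rule pe_compL, rule pe_sym, rule TR) (simp_all add: ptransp_def fd)
  also have "pe dl \<dots> (PComp (PTens (PSmul (-1) PH) (bid 1)) PAmalg)"
    by (rule pe_compL, rule pe_tens, rule R3) (simp_all add: ptransp_def fd)
  also have "pe dl \<dots> (PComp (PSmul (-1) H01) PAmalg)"
    unfolding H01_def by (rule pe_compL, rule ax_tens_smul) simp_all
  also have "pe dl \<dots> (PSmul (-1) (PComp H01 PAmalg))"
    by (rule ax_comp_smul_l) simp_all
  finally show ?thesis .
qed

lemma neg_flip: "pe dl a (PSmul (-1) b) \<Longrightarrow> pwf b \<Longrightarrow> pe dl b (PSmul (-1) a)"
proof -
  assume h: "pe dl a (PSmul (-1) b)" and b: "pwf b"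
  have "pe dl b (PSmul 1 b)" by (rule pe_sym, rule ax_smul_one) (simp add: b)
  also have "pe dl \<dots> (PSmul (-1) (PSmul (-1) b))" by (rule pe_sym, rule ax_smul_smul') (simp_all add: b)
  also have "pe dl \<dots> (PSmul (-1) a)" by (rule pe_smul, rule pe_sym, rule h)
  finally show ?thesis .
qed

lemma L2core: "pe dl (cl [PPi, Dg capII, PTens PH XI, Dg cupII]) (cl [PPi, H01, X0])"
proof -
  have g1: "pe dl (PComp PPi (Dg capII)) (Dg K4)"
    unfolding PPi_def by (rule B0) (simp_all add: c9 c9l)
  have f2: "pe dl (PTens PH XI) (PComp (Dg IXI) (PTens PH (bid 3)))"
    by (rule pe_sym, rule B2[where B=XI]) (simp_all add: bot3 fd)
  have g3: "pe dl (PComp (Dg K4) (Dg IXI)) (Dg K4')"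
    by (rule B0) (simp_all add: c10 c10l)
  have g4: "pe dl (Dg K4') (PComp PPi (Dg IG))"
    unfolding PPi_def by (rule pe_sym, rule B0) (simp_all add: c11 c11l)
  have g5: "pe dl (PComp (Dg IG) (PTens PH (bid 3))) (PTens PH Gd)"
    by (rule B2[where B=Gd]) (simp_all add: bcomp_bid_bot fd)
  have g6: "pe dl (PTens PH Gd) (PComp H01 (Dg IG))"
    unfolding H01_def by (rule pe_sym, rule B1[where A=Gd]) (simp_all add: bcomp_bid_top fd)
  have g7: "pe dl (PComp (Dg IG) (Dg cupII)) X0"
    unfolding X0_def by (rule B0) (simp_all add: c12 c12l)
  have "pe dl (cl [PPi, Dg capII, PTens PH XI, Dg cupII]) (cl [Dg K4, PTens PH XI, Dg cupII])"
    using rw[of dl "[PPi, Dg capII]" "[Dg K4]" "[]" "[PTens PH XI, Dg cupII]"] g1 by simp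
  also have "pe dl \<dots> (cl [Dg K4, Dg IXI, PTens PH (bid 3), Dg cupII])"
    using rw[of dl "[PTens PH XI]" "[Dg IXI, PTens PH (bid 3)]" "[Dg K4]" "[Dg cupII]"] f2 by simp
  also have "pe dl \<dots> (cl [Dg K4', PTens PH (bid 3), Dg cupII])"
    using rw[of dl "[Dg K4, Dg IXI]" "[Dg K4']" "[]" "[PTens PH (bid 3), Dg cupII]"] g3 by simp
  also have "pe dl \<dots> (cl [PPi, Dg IG, PTens PH (bid 3), Dg cupII])"
    using rw[of dl "[Dg K4']" "[PPi, Dg IG]" "[]" "[PTens PH (bid 3), Dg cupII]"] g4 by simp
  also have "pe dl \<dots> (cl [PPi, PTens PH Gd, Dg cupII])"
    using rw[of dl "[Dg IG, PTens PH (bid 3)]" "[PTens PH Gd]" "[PPi]" "[Dg cupII]"] g5 by simp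
  also have "pe dl \<dots> (cl [PPi, H01, Dg IG, Dg cupII])"
    using rw[of dl "[PTens PH Gd]" "[H01, Dg IG]" "[PPi]" "[Dg cupII]"] g6 by simp
  also have "pe dl \<dots> (cl [PPi, H01, X0])"
    using rw[of dl "[Dg IG, Dg cupII]" "[X0]" "[PPi, H01]" "[]"] g7 by simp
  finally show ?thesis .
qed

lemma L2: "pe dl (PComp PPi H02) (PSmul (-1) (PComp PPi H01))"
proof -
  have "PComp PPi H02 = cl [PPi, H02]" by simp
  also have "pe dl \<dots> (cl [PPi, X0, H01, X0])"
    using rw[of dl "[H02]" "[X0, H01, X0]" "[PPi]" "[]"] by (simp add: H02_def pe_refl)
  also have "pe dl \<dots> (cl [PPi, H01, X0])"
    using rw[of dl "[PPi, X0]" "[PPi]" "[]" "[H01, X0]"] PX by simp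
  also have "pe dl \<dots> (cl [PPi, Dg capII, PTens PH XI, Dg cupII])"
    by (rule pe_sym, rule L2core)
  also have "pe dl \<dots> (PComp PPi (cl [Dg capII, PTens PH XI, Dg cupII]))"
    using cl_append[of "[PPi]" "[Dg capII, PTens PH XI, Dg cupII]" dl] by (simp add: fd)
  also have "pe dl \<dots> (PComp PPi (PTens (ptransp PH) (bid 1)))"
    by (rule pe_compR, rule pe_sym, rule TR) (simp_all add: ptransp_def fd)
  also have "pe dl \<dots> (PComp PPi (PTens (PSmul (-1) PH) (bid 1)))"
    by (rule pe_compR, rule pe_tens, rule R3) (simp_all add: ptransp_def fd)
  also have "pe dl \<dots> (PComp PPi (PSmul (-1) H01))"
    unfolding H01_def by (rule pe_compR, rule ax_tens_smul) simp_all
  also have "pe dl \<dots> (PSmul (-1) (PComp PPi H01))"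
    by (rule ax_comp_smul_r) simp_all
  finally show ?thesis .
qed

lemma L1': "pe dl (PComp H01 PAmalg) (PSmul (-1) (PComp H02 PAmalg))"
  by (rule neg_flip[OF L1]) simp
lemma L2': "pe dl (PComp PPi H01) (PSmul (-1) (PComp PPi H02))"
  by (rule neg_flip[OF L2]) simp

lemma hp2: "hpow 2 = PComp PH PH" by (simp add: numeral_2_eq_2)
lemma hp3: "hpow 3 = PComp PH (PComp PH PH)" by (simp add: numeral_3_eq_3)

lemma Z1eq: "Zl 1 = cl [PPi, H01, PAmalg]" by (simp add: Zl_def H01_def One_nat_def)

lemma Z2eq: "pe dl (Zl 2) (cl [PPi, H01, H01, PAmalg])"
proof -
  have "Zl 2 = cl [PPi, PTens (cl [PH, PH]) (bid 1), PAmalg]" by (simp add: Zl_def hp2)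
  also have "pe dl \<dots> (cl [PPi, H01, H01, PAmalg])"
    using rw[of dl "[PTens (cl [PH, PH]) (bid 1)]" "[H01, H01]" "[PPi]" "[PAmalg]"]
      cl_tens[of "[PH, PH]" dl 1] by (simp add: H01_def)
  finally show ?thesis .
qed

lemma Z3eq: "pe dl (Zl 3) (cl [PPi, H01, H01, H01, PAmalg])"
proof -
  have "Zl 3 = cl [PPi, PTens (cl [PH, PH, PH]) (bid 1), PAmalg]" by (simp add: Zl_def hp3)
  also have "pe dl \<dots> (cl [PPi, H01, H01, H01, PAmalg])"
    using rw[of dl "[PTens (cl [PH, PH, PH]) (bid 1)]" "[H01, H01, H01]" "[PPi]" "[PAmalg]"]
      cl_tens[of "[PH, PH, PH]" dl 1] by (simp add: H01_def)
  finally show ?thesis .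
qed

lemma Z1neg: "pe dl (Zl 1) (PSmul (-1) (Zl 1))"
proof -
  have "Zl 1 = cl [PPi, H01, PAmalg]" by (rule Z1eq)
  also have "pe dl \<dots> (cl [PSmul (-1) (PComp PPi H02), PAmalg])"
    using rw[of dl "[PPi, H01]" "[PSmul (-1) (PComp PPi H02)]" "[]" "[PAmalg]"] L2' by simp
  also have "pe dl \<dots> (PSmul (-1) (cl [PComp PPi H02, PAmalg]))"
    using cl_smul[of "[]" "PComp PPi H02" "[PAmalg]" dl "-1"] by simp
  also have "pe dl \<dots> (PSmul (-1) (cl [PPi, X0, H01, X0, PAmalg]))"
    by (rule pe_smul) (use rw[of dl "[PComp PPi H02]" "[PPi, X0, H01, X0]" "[]" "[PAmalg]"] in \<open>simp add: H02_def pe_refl\<close>)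
  also have "pe dl \<dots> (PSmul (-1) (cl [PPi, H01, X0, PAmalg]))"
    by (rule pe_smul) (use rw[of dl "[PPi, X0]" "[PPi]" "[]" "[H01, X0, PAmalg]"] PX in simp)
  also have "pe dl \<dots> (PSmul (-1) (cl [PPi, H01, PAmalg]))"
    by (rule pe_smul) (use rw[of dl "[X0, PAmalg]" "[PAmalg]" "[PPi, H01]" "[]"] XA in simp)
  also have "cl [PPi, H01, PAmalg] = Zl 1" by (rule Z1eq[symmetric])
  finally show ?thesis .
qed

lemma Z1zero: "(\<exists>u::'k. 2 * u = 1) \<Longrightarrow> pe dl (Zl 1) (PZero 0 0)"
  using two_inv[OF Z1neg] by (auto simp: Z1eq)

abbreviation "Om \<equiv> PAdd H02 (H12 dl)"

lemma R0: "pe dl (PComp H01 Om) (PComp Om H01)"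
proof (rule eq_diff)
  show "pe dl (PAdd (PComp H01 Om) (PSmul (-1) (PComp Om H01))) (PZero 2 2)"
    by (rule peI[OF peq.rel_ii]) simp_all
qed simp_all

lemma H12A: "pe dl (PComp (H12 dl) PAmalg) (PSmul (1 - dl) PAmalg)"
proof -
  let ?N = "PSmul (-1) (PSmul 1 (Dg Ud)) :: 'k pterm"
  have "PComp (H12 dl) PAmalg = PComp (PAdd X0 ?N) PAmalg" by (simp add: H12_eq)
  also have "pe dl \<dots> (PAdd (PComp X0 PAmalg) (PComp ?N PAmalg))"
    by (rule ax_comp_add_l) simp_all
  also have "pe dl \<dots> (PAdd PAmalg (PComp ?N PAmalg))"
    by (rule pe_addL[OF XA]) simp_all
  also have "pe dl \<dots> (PAdd PAmalg (PSmul (-1) (PComp (PSmul 1 (Dg Ud)) PAmalg)))"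
    by (rule pe_addR, rule ax_comp_smul_l) simp_all
  also have "pe dl \<dots> (PAdd PAmalg (PSmul (-1) (PSmul 1 (PComp (Dg Ud) PAmalg))))"
    by (rule pe_addR, rule pe_smul, rule ax_comp_smul_l) simp_all
  also have "pe dl \<dots> (PAdd PAmalg (PSmul (-1) (PSmul 1 (PSmul dl PAmalg))))"
  proof -
    have "pe dl (PComp (Dg Ud) PAmalg) (PSmul (dl ^ bloops Ud bcup) PAmalg)"
      unfolding PAmalg_def by (rule B0n) (simp_all add: c13)
    then have "pe dl (PComp (Dg Ud) PAmalg) (PSmul dl PAmalg)" by (simp add: c13l)
    then show ?thesis by (intro pe_addR pe_smul) simp_all
  qed
  also have "pe dl \<dots> (PAdd (PSmul 1 PAmalg) (PSmul (-dl) PAmalg))"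
  proof (rule pe_add)
    show "pe dl PAmalg (PSmul 1 PAmalg)" by (rule pe_sym, rule ax_smul_one) simp
    have "pe dl (PSmul (-1) (PSmul 1 (PSmul dl PAmalg))) (PSmul (-1) (PSmul dl PAmalg))"
      by (rule pe_smul, rule ax_smul_one) simp
    also have "pe dl \<dots> (PSmul (-dl) PAmalg)" by (rule ax_smul_smul') simp_all
    finally show "pe dl (PSmul (-1) (PSmul 1 (PSmul dl PAmalg))) (PSmul (-dl) PAmalg)" .
  qed simp_all
  also have "pe dl \<dots> (PSmul (1 - dl) PAmalg)"
    using ax_smul_add_l[of PAmalg dl 1 "-dl"] by (simp add: pe_sym)
  finally show ?thesis .
qed

abbreviation "Z3c \<equiv> cl [PPi, H01, H01, H01, PAmalg] :: 'k pterm"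
abbreviation "Z2c \<equiv> cl [PPi, H01, H01, PAmalg] :: 'k pterm"

lemma t1: "pe dl (cl [PPi, H01, H01, H02, PAmalg]) (PSmul (-1) Z3c)"
proof -
  have "pe dl (cl [PPi, H01, H01, H02, PAmalg]) (cl [PPi, H01, H01, PSmul (-1) (PComp H01 PAmalg)])"
    using rw[of dl "[H02, PAmalg]" "[PSmul (-1) (PComp H01 PAmalg)]" "[PPi, H01, H01]" "[]"] L1 by simp
  also have "pe dl \<dots> (PSmul (-1) (cl [PPi, H01, H01, PComp H01 PAmalg]))"
    using cl_smul[of "[PPi, H01, H01]" "PComp H01 PAmalg" "[]" dl "-1"] by simp
  also have "cl [PPi, H01, H01, PComp H01 PAmalg] = Z3c" by simp
  finally show ?thesis .
qed

lemma t2: "pe dl (cl [PPi, H01, H01, H12 dl, PAmalg]) (PSmul (1 - dl) Z2c)"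
proof -
  have "pe dl (cl [PPi, H01, H01, H12 dl, PAmalg]) (cl [PPi, H01, H01, PSmul (1 - dl) PAmalg])"
    using rw[of dl "[H12 dl, PAmalg]" "[PSmul (1 - dl) PAmalg]" "[PPi, H01, H01]" "[]"] H12A by simp
  also have "pe dl \<dots> (PSmul (1 - dl) (cl [PPi, H01, H01, PAmalg]))"
    using cl_smul[of "[PPi, H01, H01]" PAmalg "[]" dl "1 - dl"] by simp
  finally show ?thesis .
qed

lemma t3: "pe dl (cl [PPi, H01, H02, H01, PAmalg]) Z3c"
proof -
  have "pe dl (cl [PPi, H01, H02, H01, PAmalg]) (cl [PPi, H01, H02, PSmul (-1) (PComp H02 PAmalg)])"
    using rw[of dl "[H01, PAmalg]" "[PSmul (-1) (PComp H02 PAmalg)]" "[PPi, H01, H02]" "[]"] L1' by simp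
  also have "pe dl \<dots> (PSmul (-1) (cl [PPi, H01, H02, H02, PAmalg]))"
    using cl_smul[of "[PPi, H01, H02]" "PComp H02 PAmalg" "[]" dl "-1"] by simp
  also have "pe dl \<dots> (PSmul (-1) (cl [PSmul (-1) (PComp PPi H02), H02, H02, PAmalg]))"
    by (rule pe_smul) (use rw[of dl "[PPi, H01]" "[PSmul (-1) (PComp PPi H02)]" "[]" "[H02, H02, PAmalg]"] L2' in simp)
  also have "pe dl \<dots> (PSmul (-1) (PSmul (-1) (cl [PComp PPi H02, H02, H02, PAmalg])))"
    by (rule pe_smul) (use cl_smul[of "[]" "PComp PPi H02" "[H02, H02, PAmalg]" dl "-1"] in simp)
  also have "pe dl \<dots> (PSmul (-1) (PSmul (-1) (cl [PPi, H02, H02, H02, PAmalg])))"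
    by (intro pe_smul) (use rw[of dl "[PComp PPi H02]" "[PPi, H02]" "[]" "[H02, H02, PAmalg]"] in \<open>simp add: pe_refl\<close>)
  also have "pe dl \<dots> (PSmul 1 (cl [PPi, H02, H02, H02, PAmalg]))"
    by (rule ax_smul_smul') simp_all
  also have "pe dl \<dots> (cl [PPi, H02, H02, H02, PAmalg])"
    by (rule ax_smul_one) simp
  also have "pe dl \<dots> (cl [PPi, X0, H01, X0, H02, H02, PAmalg])"
    using rw[of dl "[H02]" "[X0, H01, X0]" "[PPi]" "[H02, H02, PAmalg]"] by (simp add: H02_def pe_refl)
  also have "pe dl \<dots> (cl [PPi, X0, H01, X0, X0, H01, X0, H02, PAmalg])"
    using rw[of dl "[H02]" "[X0, H01, X0]" "[PPi, X0, H01, X0]" "[H02, PAmalg]"] by (simp add: H02_def pe_refl)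
  also have "pe dl \<dots> (cl [PPi, X0, H01, X0, X0, H01, X0, X0, H01, X0, PAmalg])"
    using rw[of dl "[H02]" "[X0, H01, X0]" "[PPi, X0, H01, X0, X0, H01, X0]" "[PAmalg]"] by (simp add: H02_def pe_refl)
  also have "pe dl \<dots> (cl [PPi, H01, X0, X0, H01, X0, X0, H01, X0, PAmalg])"
    using rw[of dl "[PPi, X0]" "[PPi]" "[]" "[H01, X0, X0, H01, X0, X0, H01, X0, PAmalg]"] PX by simp
  also have "pe dl \<dots> (cl [PPi, H01, X0, X0, H01, X0, X0, H01, PAmalg])"
    using rw[of dl "[X0, PAmalg]" "[PAmalg]" "[PPi, H01, X0, X0, H01, X0, X0, H01]" "[]"] XA by simp
  also have "pe dl \<dots> (cl [PPi, H01, idt 2, H01, X0, X0, H01, PAmalg])"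
    using rw[of dl "[X0, X0]" "[idt 2]" "[PPi, H01]" "[H01, X0, X0, H01, PAmalg]"] XX by simp
  also have "pe dl \<dots> (cl [PPi, H01, idt 2, H01, idt 2, H01, PAmalg])"
    using rw[of dl "[X0, X0]" "[idt 2]" "[PPi, H01, idt 2, H01]" "[H01, PAmalg]"] XX by simp
  also have "pe dl \<dots> (cl [PPi, H01, H01, idt 2, H01, PAmalg])"
    using rw[of dl "[H01, idt 2]" "[H01]" "[PPi]" "[H01, idt 2, H01, PAmalg]"] ax_id_right[of H01 2 dl] by simp
  also have "pe dl \<dots> (cl [PPi, H01, H01, H01, PAmalg])"
    using rw[of dl "[H01, idt 2]" "[H01]" "[PPi, H01]" "[H01, PAmalg]"] ax_id_right[of H01 2 dl] by simp
  finally show ?thesis .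
qed

lemma t4: "(\<exists>u::'k. 2 * u = 1) \<Longrightarrow> pe dl (cl [PPi, H01, H12 dl, H01, PAmalg]) (PSmul (-1) Z2c)"
proof -
  assume u: "\<exists>u::'k. 2 * u = 1"
  let ?N = "PSmul (-1) (PSmul 1 (Dg Ud)) :: 'k pterm"
  have "cl [PPi, H01, H12 dl, H01, PAmalg] = cl ([PPi, H01] @ [PAdd X0 ?N] @ [H01, PAmalg])" by (simp add: H12_eq)
  also have "pe dl \<dots> (PAdd (cl [PPi, H01, X0, H01, PAmalg]) (cl [PPi, H01, ?N, H01, PAmalg]))"
    using cl_add[of "[PPi, H01]" X0 "[H01, PAmalg]" ?N dl] by simp
  also have "pe dl \<dots> (PAdd (PSmul (-1) Z2c) (PZero 0 0))"
  proof (rule pe_add)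
    have "pe dl (cl [PPi, H01, X0, H01, PAmalg]) (cl [PPi, H01, X0, H01, X0, PAmalg])"
      using rw[of dl "[PAmalg]" "[X0, PAmalg]" "[PPi, H01, X0, H01]" "[]"] XA by (simp add: pe_sym)
    also have "pe dl \<dots> (cl [PPi, H01, H02, PAmalg])"
      using rw[of dl "[X0, H01, X0]" "[H02]" "[PPi, H01]" "[PAmalg]"] by (simp add: H02_def pe_refl)
    also have "pe dl \<dots> (cl [PPi, H01, PSmul (-1) (PComp H01 PAmalg)])"
      using rw[of dl "[H02, PAmalg]" "[PSmul (-1) (PComp H01 PAmalg)]" "[PPi, H01]" "[]"] L1 by simp
    also have "pe dl \<dots> (PSmul (-1) (cl [PPi, H01, PComp H01 PAmalg]))"
      using cl_smul[of "[PPi, H01]" "PComp H01 PAmalg" "[]" dl "-1"] by simp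
    finally show "pe dl (cl [PPi, H01, X0, H01, PAmalg]) (PSmul (-1) Z2c)" by simp
    have "pe dl (cl [PPi, H01, ?N, H01, PAmalg]) (PSmul (-1) (cl [PPi, H01, PSmul 1 (Dg Ud), H01, PAmalg]))"
      using cl_smul[of "[PPi, H01]" "PSmul 1 (Dg Ud)" "[H01, PAmalg]" dl "-1"] by simp
    also have "pe dl \<dots> (PSmul (-1) (PSmul 1 (cl [PPi, H01, Dg Ud, H01, PAmalg])))"
      by (rule pe_smul) (use cl_smul[of "[PPi, H01]" "Dg Ud" "[H01, PAmalg]" dl 1] in simp)
    also have "pe dl \<dots> (PSmul (-1) (PSmul 1 (cl [PPi, H01, PAmalg, PPi, H01, PAmalg])))"
    proof (intro pe_smul)
      have f: "pe dl (Dg Ud) (PComp PAmalg PPi)"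
        unfolding PAmalg_def PPi_def by (rule pe_sym, rule B0) (simp_all add: c4 c4l)
      show "pe dl (cl [PPi, H01, Dg Ud, H01, PAmalg]) (cl [PPi, H01, PAmalg, PPi, H01, PAmalg])"
        using rw[of dl "[Dg Ud]" "[PAmalg, PPi]" "[PPi, H01]" "[H01, PAmalg]"] f by simp
    qed
    also have "pe dl \<dots> (PSmul (-1) (PSmul 1 (PComp (Zl 1) (Zl 1))))"
      by (intro pe_smul) (use cl_append[of "[PPi, H01, PAmalg]" "[PPi, H01, PAmalg]" dl] in \<open>simp add: Z1eq\<close>)
    also have "pe dl \<dots> (PSmul (-1) (PSmul 1 (PComp (PZero 0 0) (Zl 1))))"
      by (intro pe_smul pe_compL Z1zero[OF u]) (simp_all add: Z1eq)
    also have "pe dl \<dots> (PSmul (-1) (PSmul 1 (PZero 0 0)))"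
      by (intro pe_smul) (use comp_zero_l[of "Zl 1" 0 dl 0] in \<open>simp add: Z1eq\<close>)
    also have "pe dl \<dots> (PSmul (-1) (PZero 0 0))"
      by (intro pe_smul smul_Zero)
    also have "pe dl \<dots> (PZero 0 0)" by (rule smul_Zero)
    finally show "pe dl (cl [PPi, H01, ?N, H01, PAmalg]) (PZero 0 0)" .
  qed simp_all
  also have "pe dl \<dots> (PSmul (-1) Z2c)" by (rule ax_add_zero) simp_all
  finally show ?thesis .
qed

lemma part1b: "(\<exists>u::'k. 2 * u = 1) \<Longrightarrow> pe dl (PSmul 2 (Zl 3)) (PSmul (2 - dl) (Zl 2))"
proof -
  assume u: "\<exists>u::'k. 2 * u = 1"
  have "pe dl (lin2 (-1) (1 - dl) Z3c Z2c) (cl [PPi, H01, H01, Om, PAmalg])"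
  proof -
    have "pe dl (cl [PPi, H01, H01, Om, PAmalg]) (PAdd (cl [PPi, H01, H01, H02, PAmalg]) (cl [PPi, H01, H01, H12 dl, PAmalg]))"
      using cl_add[of "[PPi, H01, H01]" H02 "[PAmalg]" "H12 dl" dl] by simp
    also have "pe dl \<dots> (lin2 (-1) (1 - dl) Z3c Z2c)"
      unfolding lin2_def by (rule pe_add[OF t1 t2]) simp_all
    finally show ?thesis by (rule pe_sym)
  qed
  also have "pe dl \<dots> (cl [PPi, H01, Om, H01, PAmalg])"
    using rw[of dl "[H01, Om]" "[Om, H01]" "[PPi, H01]" "[PAmalg]"] R0 by simp
  also have "pe dl \<dots> (PAdd (cl [PPi, H01, H02, H01, PAmalg]) (cl [PPi, H01, H12 dl, H01, PAmalg]))"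
    using cl_add[of "[PPi, H01]" H02 "[H01, PAmalg]" "H12 dl" dl] by simp
  also have "pe dl \<dots> (PAdd Z3c (PSmul (-1) Z2c))"
    by (rule pe_add[OF t3 t4[OF u]]) simp_all
  also have "pe dl \<dots> (lin2 1 (-1) Z3c Z2c)"
    unfolding lin2_def by (rule pe_addL, rule pe_sym, rule ax_smul_one) simp_all
  finally have "pe dl (PSmul 2 Z3c) (PSmul (2 - dl) Z2c)" by (rule G3) simp_all
  then show ?thesis
    by (meson pe_smul pe_sym pe_trans Z2eq Z3eq)
qed

abbreviation ptr :: "'k pterm \<Rightarrow> 'k pterm" where
  "ptr M \<equiv> cl [Dg Icap, PTens M (bid 1), Dg Icup]"

definition cm :: "'k pterm \<Rightarrow> bool" where
  "cm c \<longleftrightarrow> pwf c \<and> psrc c = 1 \<and> ptgt c = 1 \<and> pe dl (PComp c PH) (PComp PH c)"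

lemma HH2: "pe dl (PTens H01 (bid 1)) (PTens PH (bid 2))"
  unfolding H01_def by (rule TT) (simp_all add: btens_bid)

lemma P1L: "pwf M \<Longrightarrow> psrc M = 2 \<Longrightarrow> ptgt M = 2 \<Longrightarrow> pe dl (ptr (PComp H01 M)) (PComp PH (ptr M))"
proof -
  assume m: "pwf M" "psrc M = 2" "ptgt M = 2"
  have f1: "pe dl (PTens (PComp H01 M) (bid 1)) (PComp (PTens H01 (bid 1)) (PTens M (bid 1)))"
    by (rule B3) (simp_all add: m)
  have f2: "pe dl (PComp (Dg Icap) (PTens PH (bid 2))) (PTens PH bcap)"
    by (rule B2[where B=bcap]) (simp_all add: bcomp_bid_bot fd)
  have f3: "pe dl (PTens PH bcap) (PComp PH (Dg Icap))"
  proof -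
    have "pe dl (PTens PH bcap) (PComp (PTens PH (bid 0)) (Dg Icap))"
      by (rule pe_sym, rule B1[where A=bcap]) (simp_all add: bcomp_bid_top fd)
    also have "pe dl \<dots> (PComp PH (Dg Icap))" by (rule pe_compL, rule ax_tens_unit) simp_all
    finally show ?thesis .
  qed
  have "pe dl (ptr (PComp H01 M)) (cl [Dg Icap, PTens H01 (bid 1), PTens M (bid 1), Dg Icup])"
    using rw[of dl "[PTens (PComp H01 M) (bid 1)]" "[PTens H01 (bid 1), PTens M (bid 1)]" "[Dg Icap]" "[Dg Icup]"] f1 m by simp
  also have "pe dl \<dots> (cl [Dg Icap, PTens PH (bid 2), PTens M (bid 1), Dg Icup])"
    using rw[of dl "[PTens H01 (bid 1)]" "[PTens PH (bid 2)]" "[Dg Icap]" "[PTens M (bid 1), Dg Icup]"] HH2 m by simp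
  also have "pe dl \<dots> (cl [PTens PH bcap, PTens M (bid 1), Dg Icup])"
    using rw[of dl "[Dg Icap, PTens PH (bid 2)]" "[PTens PH bcap]" "[]" "[PTens M (bid 1), Dg Icup]"] f2 m by simp
  also have "pe dl \<dots> (cl [PH, Dg Icap, PTens M (bid 1), Dg Icup])"
    using rw[of dl "[PTens PH bcap]" "[PH, Dg Icap]" "[]" "[PTens M (bid 1), Dg Icup]"] f3 m by simp
  finally show ?thesis by simp
qed

lemma P1R: "pwf M \<Longrightarrow> psrc M = 2 \<Longrightarrow> ptgt M = 2 \<Longrightarrow> pe dl (ptr (PComp M H01)) (PComp (ptr M) PH)"
proof -
  assume m: "pwf M" "psrc M = 2" "ptgt M = 2"
  have f1: "pe dl (PTens (PComp M H01) (bid 1)) (PComp (PTens M (bid 1)) (PTens H01 (bid 1)))"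
    by (rule B3) (simp_all add: m)
  have f2: "pe dl (PComp (PTens PH (bid 2)) (Dg Icup)) (PTens PH bcup)"
    by (rule B1[where A=bcup]) (simp_all add: bcomp_bid_top fd)
  have f3: "pe dl (PTens PH bcup) (PComp (Dg Icup) PH)"
  proof -
    have "pe dl (PTens PH bcup) (PComp (Dg Icup) (PTens PH (bid 0)))"
      by (rule pe_sym, rule B2[where B=bcup]) (simp_all add: bcomp_bid_bot fd)
    also have "pe dl \<dots> (PComp (Dg Icup) PH)" by (rule pe_compR, rule ax_tens_unit) simp_all
    finally show ?thesis .
  qed
  have "pe dl (ptr (PComp M H01)) (cl [Dg Icap, PTens M (bid 1), PTens H01 (bid 1), Dg Icup])"
    using rw[of dl "[PTens (PComp M H01) (bid 1)]" "[PTens M (bid 1), PTens H01 (bid 1)]" "[Dg Icap]" "[Dg Icup]"] f1 m by simp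
  also have "pe dl \<dots> (cl [Dg Icap, PTens M (bid 1), PTens PH (bid 2), Dg Icup])"
    using rw[of dl "[PTens H01 (bid 1)]" "[PTens PH (bid 2)]" "[Dg Icap, PTens M (bid 1)]" "[Dg Icup]"] HH2 m by simp
  also have "pe dl \<dots> (cl [Dg Icap, PTens M (bid 1), PTens PH bcup])"
    using rw[of dl "[PTens PH (bid 2), Dg Icup]" "[PTens PH bcup]" "[Dg Icap, PTens M (bid 1)]" "[]"] f2 m by simp
  also have "pe dl \<dots> (cl [Dg Icap, PTens M (bid 1), Dg Icup, PH])"
    using rw[of dl "[PTens PH bcup]" "[Dg Icup, PH]" "[Dg Icap, PTens M (bid 1)]" "[]"] f3 m by simp
  also have "pe dl \<dots> (PComp (ptr M) PH)"
    using cl_append[of "[Dg Icap, PTens M (bid 1), Dg Icup]" "[PH]" dl] m by simp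
  finally show ?thesis .
qed

lemma ptr_cong: "pe dl M M' \<Longrightarrow> psrc M = 2 \<Longrightarrow> ptgt M = 2 \<Longrightarrow> pe dl (ptr M) (ptr M')"
proof -
  assume h: "pe dl M M'" "psrc M = 2" "ptgt M = 2"
  have t: "pwf M" "pwf M'" "psrc M' = 2" "ptgt M' = 2" using h pe_wf pe_src pe_tgt by metis+
  show ?thesis
    using rw[of dl "[PTens M (bid 1)]" "[PTens M' (bid 1)]" "[Dg Icap]" "[Dg Icup]"] pe_tens[OF h(1), of "bid 1"] t h
    by simp
qed

lemma ptr_add: "pwf a \<Longrightarrow> pwf b \<Longrightarrow> psrc a = 2 \<Longrightarrow> ptgt a = 2 \<Longrightarrow> psrc b = 2 \<Longrightarrow> ptgt b = 2 \<Longrightarrow>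
  pe dl (ptr (PAdd a b)) (PAdd (ptr a) (ptr b))"
proof -
  assume t: "pwf a" "pwf b" "psrc a = 2" "ptgt a = 2" "psrc b = 2" "ptgt b = 2"
  have "pe dl (ptr (PAdd a b)) (cl [Dg Icap, PAdd (PTens a (bid 1)) (PTens b (bid 1)), Dg Icup])"
    using rw[of dl "[PTens (PAdd a b) (bid 1)]" "[PAdd (PTens a (bid 1)) (PTens b (bid 1))]" "[Dg Icap]" "[Dg Icup]"]
      ax_tens_add[of a b "bid 1" dl] t by simp
  also have "pe dl \<dots> (PAdd (ptr a) (ptr b))"
    using cl_add[of "[Dg Icap]" "PTens a (bid 1)" "[Dg Icup]" "PTens b (bid 1)" dl] t by simp
  finally show ?thesis .
qed

lemma ptr_smul: "pwf a \<Longrightarrow> psrc a = 2 \<Longrightarrow> ptgt a = 2 \<Longrightarrow> pe dl (ptr (PSmul c a)) (PSmul c (ptr a))"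
proof -
  assume t: "pwf a" "psrc a = 2" "ptgt a = 2"
  have "pe dl (ptr (PSmul c a)) (cl [Dg Icap, PSmul c (PTens a (bid 1)), Dg Icup])"
    using rw[of dl "[PTens (PSmul c a) (bid 1)]" "[PSmul c (PTens a (bid 1))]" "[Dg Icap]" "[Dg Icup]"]
      ax_tens_smul[of a "bid 1" dl c] t by simp
  also have "pe dl \<dots> (PSmul c (ptr a))"
    using cl_smul[of "[Dg Icap]" "PTens a (bid 1)" "[Dg Icup]" dl c] t by simp
  finally show ?thesis .
qed

lemma cm_PH: "cm PH" by (simp add: cm_def pe_refl)
lemma cm_id: "cm (idt 1)"
proof -
  have "pe dl (PComp (idt 1) PH) PH" by (rule ax_id_left) simp_all
  moreover have "pe dl (PComp PH (idt 1)) PH" by (rule ax_id_right) simp_all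
  ultimately show ?thesis by (simp add: cm_def) (meson pe_sym pe_trans)
qed
lemma cm_pe: "pe dl c c' \<Longrightarrow> cm c \<Longrightarrow> cm c'"
proof -
  assume h: "pe dl c c'" "cm c"
  have t: "pwf c'" "psrc c' = 1" "ptgt c' = 1" "pwf c" "psrc c = 1" "ptgt c = 1"
    using h pe_wf pe_src pe_tgt by (metis cm_def)+
  have "pe dl (PComp c' PH) (PComp c PH)" by (rule pe_compL, rule pe_sym, rule h(1)) (simp_all add: t)
  also have "pe dl \<dots> (PComp PH c)" using h(2) by (simp add: cm_def)
  also have "pe dl \<dots> (PComp PH c')" by (rule pe_compR[OF h(1)]) (simp_all add: t)
  finally show ?thesis using t by (simp add: cm_def)
qed
lemma cm_smul: "cm c \<Longrightarrow> cm (PSmul x c)"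
proof -
  assume h: "cm c"
  then have t: "pwf c" "psrc c = 1" "ptgt c = 1" by (simp_all add: cm_def)
  have "pe dl (PComp (PSmul x c) PH) (PSmul x (PComp c PH))" by (rule ax_comp_smul_l) (simp_all add: t)
  also have "pe dl \<dots> (PSmul x (PComp PH c))" by (rule pe_smul) (use h in \<open>simp add: cm_def\<close>)
  also have "pe dl \<dots> (PComp PH (PSmul x c))" by (rule pe_sym, rule ax_comp_smul_r) (simp_all add: t)
  finally show ?thesis using t by (simp add: cm_def)
qed
lemma cm_add: "cm a \<Longrightarrow> cm b \<Longrightarrow> cm (PAdd a b)"
proof -
  assume h: "cm a" "cm b"
  then have t: "pwf a" "psrc a = 1" "ptgt a = 1" "pwf b" "psrc b = 1" "ptgt b = 1" by (simp_all add: cm_def)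
  have "pe dl (PComp (PAdd a b) PH) (PAdd (PComp a PH) (PComp b PH))" by (rule ax_comp_add_l) (simp_all add: t)
  also have "pe dl \<dots> (PAdd (PComp PH a) (PComp PH b))" by (rule pe_add) (use h t in \<open>simp_all add: cm_def\<close>)
  also have "pe dl \<dots> (PComp PH (PAdd a b))" by (rule pe_sym, rule ax_comp_add_r) (simp_all add: t)
  finally show ?thesis using t by (simp add: cm_def)
qed
lemma cm_comp: "cm a \<Longrightarrow> cm b \<Longrightarrow> cm (PComp a b)"
proof -
  assume h: "cm a" "cm b"
  then have t: "pwf a" "psrc a = 1" "ptgt a = 1" "pwf b" "psrc b = 1" "ptgt b = 1" by (simp_all add: cm_def)
  have "pe dl (PComp (PComp a b) PH) (PComp a (PComp b PH))" by (rule pe_sym, rule ax_comp_assoc) (simp_all add: t)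
  also have "pe dl \<dots> (PComp a (PComp PH b))" by (rule pe_compR) (use h t in \<open>simp_all add: cm_def\<close>)
  also have "pe dl \<dots> (PComp (PComp a PH) b)" by (rule ax_comp_assoc) (simp_all add: t)
  also have "pe dl \<dots> (PComp (PComp PH a) b)" by (rule pe_compL) (use h t in \<open>simp_all add: cm_def\<close>)
  also have "pe dl \<dots> (PComp PH (PComp a b))" by (rule pe_sym, rule ax_comp_assoc) (simp_all add: t)
  finally show ?thesis using t by (simp add: cm_def)
qed
lemma cm_diff: "cm (PAdd a b) \<Longrightarrow> cm b \<Longrightarrow> pwf a \<Longrightarrow> cm a"
proof -
  assume h: "cm (PAdd a b)" "cm b" "pwf a"
  then have t: "psrc a = 1" "ptgt a = 1" "pwf b" "psrc b = 1" "ptgt b = 1" by (simp_all add: cm_def)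
  have "pe dl (PAdd (PAdd a b) (PSmul (-1) b)) (PAdd a (PAdd b (PSmul (-1) b)))"
    by (rule ax_add_assoc) (simp_all add: t h)
  also have "pe dl \<dots> (PAdd a (PZero 1 1))" by (rule pe_addR, rule ax_add_neg) (simp_all add: t h)
  also have "pe dl \<dots> a" by (rule ax_add_zero) (simp_all add: t h)
  finally have "pe dl (PAdd (PAdd a b) (PSmul (-1) b)) a" .
  moreover have "cm (PAdd (PAdd a b) (PSmul (-1) b))" by (intro cm_add cm_smul h)
  ultimately show ?thesis by (rule cm_pe)
qed

lemma UAP: "pe dl (Dg Ud) (PComp PAmalg PPi)"
  unfolding PAmalg_def PPi_def by (rule pe_sym, rule B0) (simp_all add: c4 c4l)

lemma ptrX: "pe dl (ptr X0) (idt 1)"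
proof -
  have f1: "pe dl (PTens X0 (bid 1)) (Dg XI)" unfolding X0_def by (rule TT) (simp_all add: fd)
  have f2: "pe dl (PComp (Dg Icap) (Dg XI)) (Dg Gd)" by (rule B0) (simp_all add: c14 c14l)
  have f3: "pe dl (PComp (Dg Gd) (Dg Icup)) (Dg (bid 1))" by (rule B0) (simp_all add: c15 c15l)
  have "pe dl (ptr X0) (cl [Dg Icap, Dg XI, Dg Icup])"
    using rw[of dl "[PTens X0 (bid 1)]" "[Dg XI]" "[Dg Icap]" "[Dg Icup]"] f1 by simp
  also have "pe dl \<dots> (cl [Dg Gd, Dg Icup])"
    using rw[of dl "[Dg Icap, Dg XI]" "[Dg Gd]" "[]" "[Dg Icup]"] f2 by simp
  also have "pe dl \<dots> (idt 1)" using f3 by (simp add: idt_def)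
  finally show ?thesis .
qed

lemma ptrU: "pe dl (ptr (Dg Ud)) (idt 1)"
proof -
  have f1: "pe dl (PTens (Dg Ud) (bid 1)) (Dg UdI)" by (rule TT) (simp_all add: fd)
  have f2: "pe dl (PComp (Dg Icap) (Dg UdI)) (Dg D3)" by (rule B0) (simp_all add: c16 c16l)
  have f3: "pe dl (PComp (Dg D3) (Dg Icup)) (Dg (bid 1))" by (rule B0) (simp_all add: c16b c16bl)
  have "pe dl (ptr (Dg Ud)) (cl [Dg Icap, Dg UdI, Dg Icup])"
    using rw[of dl "[PTens (Dg Ud) (bid 1)]" "[Dg UdI]" "[Dg Icap]" "[Dg Icup]"] f1 by simp
  also have "pe dl \<dots> (cl [Dg D3, Dg Icup])"
    using rw[of dl "[Dg Icap, Dg UdI]" "[Dg D3]" "[]" "[Dg Icup]"] f2 by simp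
  also have "pe dl \<dots> (idt 1)" using f3 by (simp add: idt_def)
  finally show ?thesis .
qed

lemma ptrI2: "pe dl (ptr (idt 2)) (PSmul (dl ^ bloops Icap Icup) (idt 1))"
proof -
  have f1: "pe dl (PTens (idt 2) (bid 1)) (Dg (bid 3))" unfolding idt_def by (rule TT) (simp_all add: btens_bid)
  have f2: "pe dl (PComp (Dg Icap) (Dg (bid 3))) (Dg Icap)" by (rule B0) (simp_all add: bcomp_bid_bot)
  have f3: "pe dl (PComp (Dg Icap) (Dg Icup)) (PSmul (dl ^ bloops Icap Icup) (Dg (bid 1)))" by (rule B0n) (simp_all add: c17)
  have "pe dl (ptr (idt 2)) (cl [Dg Icap, Dg (bid 3), Dg Icup])"
    using rw[of dl "[PTens (idt 2) (bid 1)]" "[Dg (bid 3)]" "[Dg Icap]" "[Dg Icup]"] f1 by simp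
  also have "pe dl \<dots> (cl [Dg Icap, Dg Icup])"
    using rw[of dl "[Dg Icap, Dg (bid 3)]" "[Dg Icap]" "[]" "[Dg Icup]"] f2 by simp
  also have "pe dl \<dots> (PSmul (dl ^ bloops Icap Icup) (idt 1))" using f3 by (simp add: idt_def)
  finally show ?thesis .
qed

lemma cm_ptr_pe: "pe dl M M' \<Longrightarrow> cm (ptr M) \<Longrightarrow> psrc M = 2 \<Longrightarrow> ptgt M = 2 \<Longrightarrow> cm (ptr M')"
  by (rule cm_pe, rule ptr_cong)

lemma cm_ptr_add: "cm (ptr a) \<Longrightarrow> cm (ptr b) \<Longrightarrow> pwf a \<Longrightarrow> pwf b \<Longrightarrow> psrc a = 2 \<Longrightarrow> ptgt a = 2 \<Longrightarrow>
   psrc b = 2 \<Longrightarrow> ptgt b = 2 \<Longrightarrow> cm (ptr (PAdd a b))"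
  by (rule cm_pe, rule pe_sym, rule ptr_add) (auto intro: cm_add)

lemma cm_ptr_smul: "cm (ptr a) \<Longrightarrow> pwf a \<Longrightarrow> psrc a = 2 \<Longrightarrow> ptgt a = 2 \<Longrightarrow> cm (ptr (PSmul c a))"
  by (rule cm_pe, rule pe_sym, rule ptr_smul) (auto intro: cm_smul)

lemma cm_ptrX: "cm (ptr X0)" by (rule cm_pe[OF pe_sym[OF ptrX] cm_id])
lemma cm_ptrU: "cm (ptr (Dg Ud))" by (rule cm_pe[OF pe_sym[OF ptrU] cm_id])
lemma cm_ptrI2: "cm (ptr (idt 2))" by (rule cm_pe[OF pe_sym[OF ptrI2]], rule cm_smul, rule cm_id)

lemma cm_ptrH01L: "pwf M \<Longrightarrow> psrc M = 2 \<Longrightarrow> ptgt M = 2 \<Longrightarrow> cm (ptr M) \<Longrightarrow> cm (ptr (PComp H01 M))"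
  by (rule cm_pe, rule pe_sym, rule P1L) (auto intro: cm_comp cm_PH)
lemma cm_ptrH01R: "pwf M \<Longrightarrow> psrc M = 2 \<Longrightarrow> ptgt M = 2 \<Longrightarrow> cm (ptr M) \<Longrightarrow> cm (ptr (PComp M H01))"
  by (rule cm_pe, rule pe_sym, rule P1R) (auto intro: cm_comp cm_PH)

abbreviation "NN \<equiv> PSmul (-1) (PSmul 1 (Dg Ud)) :: 'k pterm"

lemma HU: "pe dl (PComp H02 (Dg Ud)) (PSmul (-1) (PComp H01 (Dg Ud)))"
proof -
  have "pe dl (cl [H02, Dg Ud]) (cl [H02, PAmalg, PPi])"
    using rw[of dl "[Dg Ud]" "[PAmalg, PPi]" "[H02]" "[]"] UAP by simp
  also have "pe dl \<dots> (cl [PSmul (-1) (PComp H01 PAmalg), PPi])"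
    using rw[of dl "[H02, PAmalg]" "[PSmul (-1) (PComp H01 PAmalg)]" "[]" "[PPi]"] L1 by simp
  also have "pe dl \<dots> (PSmul (-1) (cl [PComp H01 PAmalg, PPi]))"
    using cl_smul[of "[]" "PComp H01 PAmalg" "[PPi]" dl "-1"] by simp
  also have "pe dl \<dots> (PSmul (-1) (cl [H01, PAmalg, PPi]))"
    by (rule pe_smul) (use rw[of dl "[PComp H01 PAmalg]" "[H01, PAmalg]" "[]" "[PPi]"] in \<open>simp add: pe_refl\<close>)
  also have "pe dl \<dots> (PSmul (-1) (cl [H01, Dg Ud]))"
    by (rule pe_smul) (use rw[of dl "[PAmalg, PPi]" "[Dg Ud]" "[H01]" "[]"] UAP in \<open>simp add: pe_sym\<close>)
  finally show ?thesis by simp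
qed

lemma UH: "pe dl (PComp (Dg Ud) H02) (PSmul (-1) (PComp (Dg Ud) H01))"
proof -
  have "pe dl (cl [Dg Ud, H02]) (cl [PAmalg, PPi, H02])"
    using rw[of dl "[Dg Ud]" "[PAmalg, PPi]" "[]" "[H02]"] UAP by simp
  also have "pe dl \<dots> (cl [PAmalg, PSmul (-1) (PComp PPi H01)])"
    using rw[of dl "[PPi, H02]" "[PSmul (-1) (PComp PPi H01)]" "[PAmalg]" "[]"] L2 by simp
  also have "pe dl \<dots> (PSmul (-1) (cl [PAmalg, PPi, H01]))"
    using cl_smul[of "[PAmalg]" "PComp PPi H01" "[]" dl "-1"] by simp
  also have "pe dl \<dots> (PSmul (-1) (cl [Dg Ud, H01]))"
    by (rule pe_smul) (use rw[of dl "[PAmalg, PPi]" "[Dg Ud]" "[]" "[H01]"] UAP in \<open>simp add: pe_sym\<close>)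
  finally show ?thesis by simp
qed

lemma cm1: "cm (ptr (PComp H02 (H12 dl)))"
proof -
  have e: "pe dl (PComp H02 (PAdd X0 NN)) (PAdd (PComp H02 X0) (PComp H02 NN))"
    by (rule ax_comp_add_r) simp_all
  have a: "cm (ptr (PComp H02 X0))"
  proof -
    have "pe dl (cl [X0, H01]) (cl [X0, H01, idt 2])"
      using rw[of dl "[H01]" "[H01, idt 2]" "[X0]" "[]"] ax_id_right[of H01 2 dl] by (simp add: pe_sym)
    also have "pe dl \<dots> (cl [X0, H01, X0, X0])"
      using rw[of dl "[idt 2]" "[X0, X0]" "[X0, H01]" "[]"] XX by (simp add: pe_sym)
    also have "pe dl \<dots> (cl [H02, X0])"
      using rw[of dl "[X0, H01, X0]" "[H02]" "[]" "[X0]"] by (simp add: H02_def pe_refl)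
    finally have f: "pe dl (PComp X0 H01) (PComp H02 X0)" by simp
    show ?thesis by (rule cm_ptr_pe[OF f], rule cm_ptrH01R) (use cm_ptrX in simp_all)
  qed
  have b: "cm (ptr (PComp H02 NN))"
  proof -
    have "pe dl (PSmul (-1) (PSmul 1 (PSmul (-1) (PComp H01 (Dg Ud))))) (PSmul (-1) (PSmul 1 (PComp H02 (Dg Ud))))"
      by (intro pe_smul pe_sym[OF HU])
    also have "pe dl \<dots> (PSmul (-1) (PComp H02 (PSmul 1 (Dg Ud))))"
      by (rule pe_smul, rule pe_sym, rule ax_comp_smul_r) simp_all
    also have "pe dl \<dots> (PComp H02 NN)"
      by (rule pe_sym, rule ax_comp_smul_r) simp_all
    finally have f: "pe dl (PSmul (-1) (PSmul 1 (PSmul (-1) (PComp H01 (Dg Ud))))) (PComp H02 NN)" .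
    show ?thesis
      by (rule cm_ptr_pe[OF f]) ((intro cm_ptr_smul cm_ptrH01L cm_ptrU; simp), simp_all)
  qed
  have "cm (ptr (PAdd (PComp H02 X0) (PComp H02 NN)))" by (rule cm_ptr_add[OF a b]) simp_all
  then show ?thesis unfolding H12_eq by (rule cm_ptr_pe[OF pe_sym[OF e]]) simp_all
qed

lemma smul2_l: "pwf a \<Longrightarrow> pwf b \<Longrightarrow> psrc b = ptgt a \<Longrightarrow>
  pe dl (PComp (PSmul x (PSmul y b)) a) (PSmul x (PSmul y (PComp b a)))"
proof -
  assume t: "pwf a" "pwf b" "psrc b = ptgt a"
  have "pe dl (PComp (PSmul x (PSmul y b)) a) (PSmul x (PComp (PSmul y b) a))" by (rule ax_comp_smul_l) (simp_all add: t)
  also have "pe dl \<dots> (PSmul x (PSmul y (PComp b a)))" by (rule pe_smul, rule ax_comp_smul_l) (simp_all add: t)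
  finally show ?thesis .
qed

lemma smul2_r: "pwf a \<Longrightarrow> pwf b \<Longrightarrow> psrc b = ptgt a \<Longrightarrow>
  pe dl (PComp b (PSmul x (PSmul y a))) (PSmul x (PSmul y (PComp b a)))"
proof -
  assume t: "pwf a" "pwf b" "psrc b = ptgt a"
  have "pe dl (PComp b (PSmul x (PSmul y a))) (PSmul x (PComp b (PSmul y a)))" by (rule ax_comp_smul_r) (simp_all add: t)
  also have "pe dl \<dots> (PSmul x (PSmul y (PComp b a)))" by (rule pe_smul, rule ax_comp_smul_r) (simp_all add: t)
  finally show ?thesis .
qed

lemma cm2: "cm (ptr (PComp (H12 dl) H02))"
proof -
  have e: "pe dl (PComp (PAdd X0 NN) H02) (PAdd (PComp X0 H02) (PComp NN H02))"
    by (rule ax_comp_add_l) simp_all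
  have a: "cm (ptr (PComp X0 H02))"
  proof -
    have "pe dl (cl [H01, X0]) (cl [idt 2, H01, X0])"
      using rw[of dl "[H01]" "[idt 2, H01]" "[]" "[X0]"] ax_id_left[of H01 2 dl] by (simp add: pe_sym)
    also have "pe dl \<dots> (cl [X0, X0, H01, X0])"
      using rw[of dl "[idt 2]" "[X0, X0]" "[]" "[H01, X0]"] XX by (simp add: pe_sym)
    also have "pe dl \<dots> (cl [X0, H02])"
      using rw[of dl "[X0, H01, X0]" "[H02]" "[X0]" "[]"] by (simp add: H02_def pe_refl)
    finally have f: "pe dl (PComp H01 X0) (PComp X0 H02)" by simp
    show ?thesis by (rule cm_ptr_pe[OF f], rule cm_ptrH01L) (use cm_ptrX in simp_all)
  qed
  have b: "cm (ptr (PComp NN H02))"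
  proof -
    have "pe dl (PSmul (-1) (PSmul 1 (PSmul (-1) (PComp (Dg Ud) H01)))) (PSmul (-1) (PSmul 1 (PComp (Dg Ud) H02)))"
      by (intro pe_smul pe_sym[OF UH])
    also have "pe dl \<dots> (PComp NN H02)" by (rule pe_sym, rule smul2_l) simp_all
    finally have f: "pe dl (PSmul (-1) (PSmul 1 (PSmul (-1) (PComp (Dg Ud) H01)))) (PComp NN H02)" .
    show ?thesis
      by (rule cm_ptr_pe[OF f]) ((intro cm_ptr_smul cm_ptrH01R cm_ptrU; simp), simp_all)
  qed
  have "cm (ptr (PAdd (PComp X0 H02) (PComp NN H02)))" by (rule cm_ptr_add[OF a b]) simp_all
  then show ?thesis unfolding H12_eq by (rule cm_ptr_pe[OF pe_sym[OF e]]) simp_all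
qed

lemma UU: "pe dl (PComp (Dg Ud) (Dg Ud)) (PSmul (dl ^ bloops bcap bcup) (Dg Ud))"
proof -
  let ?c = "dl ^ bloops bcap bcup"
  have f: "pe dl (PComp PPi PAmalg) (PSmul ?c (idt 0))"
    unfolding PPi_def PAmalg_def idt_def by (rule B0n) (simp_all add: c22)
  have "pe dl (cl [Dg Ud, Dg Ud]) (cl [PAmalg, PPi, Dg Ud])"
    using rw[of dl "[Dg Ud]" "[PAmalg, PPi]" "[]" "[Dg Ud]"] UAP by simp
  also have "pe dl \<dots> (cl [PAmalg, PPi, PAmalg, PPi])"
    using rw[of dl "[Dg Ud]" "[PAmalg, PPi]" "[PAmalg, PPi]" "[]"] UAP by simp
  also have "pe dl \<dots> (cl [PAmalg, PSmul ?c (idt 0), PPi])"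
    using rw[of dl "[PPi, PAmalg]" "[PSmul ?c (idt 0)]" "[PAmalg]" "[PPi]"] f by simp
  also have "pe dl \<dots> (PSmul ?c (cl [PAmalg, idt 0, PPi]))"
    using cl_smul[of "[PAmalg]" "idt 0" "[PPi]" dl ?c] by simp
  also have "pe dl \<dots> (PSmul ?c (cl [PAmalg, PPi]))"
    by (rule pe_smul) (use rw[of dl "[idt 0, PPi]" "[PPi]" "[PAmalg]" "[]"] ax_id_left[of PPi 0 dl] in simp)
  also have "pe dl \<dots> (PSmul ?c (Dg Ud))"
    by (rule pe_smul) (use UAP in \<open>simp add: pe_sym\<close>)
  finally show ?thesis by simp
qed

lemma cm3: "cm (ptr (PComp (H12 dl) (H12 dl)))"
proof -
  have e: "pe dl (PComp (PAdd X0 NN) (PAdd X0 NN))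
     (PAdd (PAdd (PComp X0 X0) (PComp X0 NN)) (PAdd (PComp NN X0) (PComp NN NN)))"
  proof -
    have "pe dl (PComp (PAdd X0 NN) (PAdd X0 NN)) (PAdd (PComp X0 (PAdd X0 NN)) (PComp NN (PAdd X0 NN)))"
      by (rule ax_comp_add_l) simp_all
    also have "pe dl \<dots> (PAdd (PAdd (PComp X0 X0) (PComp X0 NN)) (PAdd (PComp NN X0) (PComp NN NN)))"
      by (rule pe_add; (rule ax_comp_add_r)?) simp_all
    finally show ?thesis .
  qed
  have p1: "cm (ptr (PComp X0 X0))" by (rule cm_ptr_pe[OF pe_sym[OF XX] cm_ptrI2]) simp_all
  have p2: "cm (ptr (PComp X0 NN))"
  proof -
    have "pe dl (cl [X0, Dg Ud]) (cl [X0, PAmalg, PPi])"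
      using rw[of dl "[Dg Ud]" "[PAmalg, PPi]" "[X0]" "[]"] UAP by simp
    also have "pe dl \<dots> (cl [PAmalg, PPi])"
      using rw[of dl "[X0, PAmalg]" "[PAmalg]" "[]" "[PPi]"] XA by simp
    also have "pe dl \<dots> (Dg Ud)" using UAP by (simp add: pe_sym)
    finally have g: "pe dl (PComp X0 (Dg Ud)) (Dg Ud)" by simp
    have "pe dl (PSmul (-1) (PSmul 1 (Dg Ud))) (PSmul (-1) (PSmul 1 (PComp X0 (Dg Ud))))"
      by (intro pe_smul pe_sym[OF g])
    also have "pe dl \<dots> (PComp X0 NN)" by (rule pe_sym, rule smul2_r) simp_all
    finally have f: "pe dl (PSmul (-1) (PSmul 1 (Dg Ud))) (PComp X0 NN)" .
    show ?thesis by (rule cm_ptr_pe[OF f]) ((intro cm_ptr_smul cm_ptrU; simp), simp_all)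
  qed
  have p3: "cm (ptr (PComp NN X0))"
  proof -
    have "pe dl (cl [Dg Ud, X0]) (cl [PAmalg, PPi, X0])"
      using rw[of dl "[Dg Ud]" "[PAmalg, PPi]" "[]" "[X0]"] UAP by simp
    also have "pe dl \<dots> (cl [PAmalg, PPi])"
      using rw[of dl "[PPi, X0]" "[PPi]" "[PAmalg]" "[]"] PX by simp
    also have "pe dl \<dots> (Dg Ud)" using UAP by (simp add: pe_sym)
    finally have g: "pe dl (PComp (Dg Ud) X0) (Dg Ud)" by simp
    have "pe dl (PSmul (-1) (PSmul 1 (Dg Ud))) (PSmul (-1) (PSmul 1 (PComp (Dg Ud) X0)))"
      by (intro pe_smul pe_sym[OF g])
    also have "pe dl \<dots> (PComp NN X0)" by (rule pe_sym, rule smul2_l) simp_all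
    finally have f: "pe dl (PSmul (-1) (PSmul 1 (Dg Ud))) (PComp NN X0)" .
    show ?thesis by (rule cm_ptr_pe[OF f]) ((intro cm_ptr_smul cm_ptrU; simp), simp_all)
  qed
  have p4: "cm (ptr (PComp NN NN))"
  proof -
    let ?c = "dl ^ bloops bcap bcup"
    have "pe dl (PSmul (-1) (PSmul 1 (PSmul (-1) (PSmul 1 (PSmul ?c (Dg Ud))))))
        (PSmul (-1) (PSmul 1 (PSmul (-1) (PSmul 1 (PComp (Dg Ud) (Dg Ud))))))"
      by (intro pe_smul pe_sym[OF UU])
    also have "pe dl \<dots> (PSmul (-1) (PSmul 1 (PComp (Dg Ud) NN)))"
      by (intro pe_smul, rule pe_sym, rule smul2_r) simp_all
    also have "pe dl \<dots> (PComp NN NN)" by (rule pe_sym, rule smul2_l) simp_all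
    finally have f: "pe dl (PSmul (-1) (PSmul 1 (PSmul (-1) (PSmul 1 (PSmul ?c (Dg Ud)))))) (PComp NN NN)" .
    show ?thesis by (rule cm_ptr_pe[OF f]) ((intro cm_ptr_smul cm_ptrU; simp), simp_all)
  qed
  have "cm (ptr (PAdd (PAdd (PComp X0 X0) (PComp X0 NN)) (PAdd (PComp NN X0) (PComp NN NN))))"
    by (intro cm_ptr_add p1 p2 p3 p4) simp_all
  then show ?thesis unfolding H12_eq by (rule cm_ptr_pe[OF pe_sym[OF e]]) simp_all
qed

abbreviation "HH \<equiv> PTens PH (bid 2) :: 'k pterm"

lemma P4: "pe dl (ptr (PComp H02 H02)) (PTens (Zl 2) (bid 1))"
proof -
  have m: "pe dl (PComp H02 H02) (cl [X0, H01, H01, X0])"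
  proof -
    have "pe dl (cl [H02, H02]) (cl [X0, H01, X0, H02])"
      using rw[of dl "[H02]" "[X0, H01, X0]" "[]" "[H02]"] by (simp add: H02_def pe_refl)
    also have "pe dl \<dots> (cl [X0, H01, X0, X0, H01, X0])"
      using rw[of dl "[H02]" "[X0, H01, X0]" "[X0, H01, X0]" "[]"] by (simp add: H02_def pe_refl)
    also have "pe dl \<dots> (cl [X0, H01, idt 2, H01, X0])"
      using rw[of dl "[X0, X0]" "[idt 2]" "[X0, H01]" "[H01, X0]"] XX by simp
    also have "pe dl \<dots> (cl [X0, H01, H01, X0])"
      using rw[of dl "[H01, idt 2]" "[H01]" "[X0]" "[H01, X0]"] ax_id_right[of H01 2 dl] by simp
    finally show ?thesis by simp
  qed
  have fX: "pe dl (PTens X0 (bid 1)) (Dg XI)" unfolding X0_def by (rule TT) (simp_all add: fd)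
  have f14: "pe dl (PComp (Dg Icap) (Dg XI)) (Dg Gd)" by (rule B0) (simp_all add: c14 c14l)
  have f19: "pe dl (PComp (Dg XI) (Dg Icup)) (Dg D2)" by (rule B0) (simp_all add: c19 c19l)
  have f18: "pe dl (Dg Gd) (PComp (Dg capI) (Dg IX))" by (rule pe_sym, rule B0) (simp_all add: c18 c18l)
  have f20: "pe dl (PComp (Dg IX) (Dg D2)) (Dg cupI)" by (rule B0) (simp_all add: c20 c20l)
  have CX: "pe dl (PComp (Dg IX) HH) (PComp HH (Dg IX))"
  proof -
    have "pe dl (PComp (Dg IX) HH) (PTens PH bX)"
      by (rule B2[where B=bX]) (simp_all add: bcomp_bid_bot fd)
    also have "pe dl \<dots> (PComp HH (Dg IX))"
      by (rule pe_sym, rule B1[where A=bX]) (simp_all add: bcomp_bid_top fd)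
    finally show ?thesis .
  qed
  have "pe dl (ptr (PComp H02 H02)) (ptr (cl [X0, H01, H01, X0]))" by (rule ptr_cong[OF m]) simp_all
  also have "pe dl \<dots> (cl [Dg Icap, PTens X0 (bid 1), PTens H01 (bid 1), PTens H01 (bid 1), PTens X0 (bid 1), Dg Icup])"
    using rw[of dl "[PTens (cl [X0, H01, H01, X0]) (bid 1)]" "[PTens X0 (bid 1), PTens H01 (bid 1), PTens H01 (bid 1), PTens X0 (bid 1)]" "[Dg Icap]" "[Dg Icup]"]
      cl_tens[of "[X0, H01, H01, X0]" dl 1] by simp
  also have "pe dl \<dots> (cl [Dg Icap, Dg XI, PTens H01 (bid 1), PTens H01 (bid 1), PTens X0 (bid 1), Dg Icup])"
    using rw[of dl "[PTens X0 (bid 1)]" "[Dg XI]" "[Dg Icap]" "[PTens H01 (bid 1), PTens H01 (bid 1), PTens X0 (bid 1), Dg Icup]"] fX by simp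
  also have "pe dl \<dots> (cl [Dg Icap, Dg XI, HH, PTens H01 (bid 1), PTens X0 (bid 1), Dg Icup])"
    using rw[of dl "[PTens H01 (bid 1)]" "[HH]" "[Dg Icap, Dg XI]" "[PTens H01 (bid 1), PTens X0 (bid 1), Dg Icup]"] HH2 by simp
  also have "pe dl \<dots> (cl [Dg Icap, Dg XI, HH, HH, PTens X0 (bid 1), Dg Icup])"
    using rw[of dl "[PTens H01 (bid 1)]" "[HH]" "[Dg Icap, Dg XI, HH]" "[PTens X0 (bid 1), Dg Icup]"] HH2 by simp
  also have "pe dl \<dots> (cl [Dg Icap, Dg XI, HH, HH, Dg XI, Dg Icup])"
    using rw[of dl "[PTens X0 (bid 1)]" "[Dg XI]" "[Dg Icap, Dg XI, HH, HH]" "[Dg Icup]"] fX by simp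
  also have "pe dl \<dots> (cl [Dg Gd, HH, HH, Dg XI, Dg Icup])"
    using rw[of dl "[Dg Icap, Dg XI]" "[Dg Gd]" "[]" "[HH, HH, Dg XI, Dg Icup]"] f14 by simp
  also have "pe dl \<dots> (cl [Dg Gd, HH, HH, Dg D2])"
    using rw[of dl "[Dg XI, Dg Icup]" "[Dg D2]" "[Dg Gd, HH, HH]" "[]"] f19 by simp
  also have "pe dl \<dots> (cl [Dg capI, Dg IX, HH, HH, Dg D2])"
    using rw[of dl "[Dg Gd]" "[Dg capI, Dg IX]" "[]" "[HH, HH, Dg D2]"] f18 by simp
  also have "pe dl \<dots> (cl [Dg capI, HH, Dg IX, HH, Dg D2])"
    using rw[of dl "[Dg IX, HH]" "[HH, Dg IX]" "[Dg capI]" "[HH, Dg D2]"] CX by simp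
  also have "pe dl \<dots> (cl [Dg capI, HH, HH, Dg IX, Dg D2])"
    using rw[of dl "[Dg IX, HH]" "[HH, Dg IX]" "[Dg capI, HH]" "[Dg D2]"] CX by simp
  also have "pe dl \<dots> (cl [Dg capI, HH, HH, Dg cupI])"
    using rw[of dl "[Dg IX, Dg D2]" "[Dg cupI]" "[Dg capI, HH, HH]" "[]"] f20 by simp
  finally have A: "pe dl (ptr (PComp H02 H02)) (cl [Dg capI, HH, HH, Dg cupI])" .
  have fP: "pe dl (PTens PPi (bid 1)) (Dg capI)" unfolding PPi_def by (rule TT) (simp_all add: fd)
  have fA: "pe dl (PTens PAmalg (bid 1)) (Dg cupI)" unfolding PAmalg_def by (rule TT) (simp_all add: fd)
  have "pe dl (PTens (Zl 2) (bid 1)) (PTens (cl [PPi, H01, H01, PAmalg]) (bid 1))"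
    by (rule pe_tens[OF Z2eq]) simp
  also have "pe dl \<dots> (cl [PTens PPi (bid 1), PTens H01 (bid 1), PTens H01 (bid 1), PTens PAmalg (bid 1)])"
    using cl_tens[of "[PPi, H01, H01, PAmalg]" dl 1] by simp
  also have "pe dl \<dots> (cl [Dg capI, PTens H01 (bid 1), PTens H01 (bid 1), PTens PAmalg (bid 1)])"
    using rw[of dl "[PTens PPi (bid 1)]" "[Dg capI]" "[]" "[PTens H01 (bid 1), PTens H01 (bid 1), PTens PAmalg (bid 1)]"] fP by simp
  also have "pe dl \<dots> (cl [Dg capI, HH, PTens H01 (bid 1), PTens PAmalg (bid 1)])"
    using rw[of dl "[PTens H01 (bid 1)]" "[HH]" "[Dg capI]" "[PTens H01 (bid 1), PTens PAmalg (bid 1)]"] HH2 by simp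
  also have "pe dl \<dots> (cl [Dg capI, HH, HH, PTens PAmalg (bid 1)])"
    using rw[of dl "[PTens H01 (bid 1)]" "[HH]" "[Dg capI, HH]" "[PTens PAmalg (bid 1)]"] HH2 by simp
  also have "pe dl \<dots> (cl [Dg capI, HH, HH, Dg cupI])"
    using rw[of dl "[PTens PAmalg (bid 1)]" "[Dg cupI]" "[Dg capI, HH, HH]" "[]"] fA by simp
  finally have B: "pe dl (PTens (Zl 2) (bid 1)) (cl [Dg capI, HH, HH, Dg cupI])" .
  show ?thesis using A B pe_sym pe_trans by metis
qed

lemma cmOO: "cm (ptr (PComp Om Om))"
proof -
  have F: "pe dl (PComp H01 (PComp Om Om)) (PComp Om (PComp Om H01))"
  proof -
    have "pe dl (cl [H01, Om, Om]) (cl [Om, H01, Om])"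
      using rw[of dl "[H01, Om]" "[Om, H01]" "[]" "[Om]"] R0 by simp
    also have "pe dl \<dots> (cl [Om, Om, H01])"
      using rw[of dl "[H01, Om]" "[Om, H01]" "[Om]" "[]"] R0 by simp
    finally show ?thesis by simp
  qed
  have "pe dl (PComp PH (ptr (PComp Om Om))) (ptr (PComp H01 (PComp Om Om)))"
    by (rule pe_sym, rule P1L) simp_all
  also have "pe dl \<dots> (ptr (PComp Om (PComp Om H01)))" by (rule ptr_cong[OF F]) simp_all
  also have "pe dl \<dots> (ptr (PComp (PComp Om Om) H01))" by (rule ptr_cong, rule ax_comp_assoc) simp_all
  also have "pe dl \<dots> (PComp (ptr (PComp Om Om)) PH)" by (rule P1R) simp_all
  finally show ?thesis unfolding cm_def by (simp add: pe_sym)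
qed

lemma part2: "cm (PTens (Zl 2) (bid 1))"
proof -
  have e: "pe dl (PComp Om Om) (PAdd (PAdd (PComp H02 H02) (PComp H02 (H12 dl))) (PAdd (PComp (H12 dl) H02) (PComp (H12 dl) (H12 dl))))"
  proof -
    have "pe dl (PComp Om Om) (PAdd (PComp H02 Om) (PComp (H12 dl) Om))" by (rule ax_comp_add_l) simp_all
    also have "pe dl \<dots> (PAdd (PAdd (PComp H02 H02) (PComp H02 (H12 dl))) (PAdd (PComp (H12 dl) H02) (PComp (H12 dl) (H12 dl))))"
      by (rule pe_add; (rule ax_comp_add_r)?) simp_all
    finally show ?thesis .
  qed
  have c0: "cm (ptr (PAdd (PAdd (PComp H02 H02) (PComp H02 (H12 dl))) (PAdd (PComp (H12 dl) H02) (PComp (H12 dl) (H12 dl)))))"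
    by (rule cm_ptr_pe[OF e cmOO]) simp_all
  have c1: "cm (PAdd (ptr (PAdd (PComp H02 H02) (PComp H02 (H12 dl)))) (ptr (PAdd (PComp (H12 dl) H02) (PComp (H12 dl) (H12 dl)))))"
    by (rule cm_pe[OF ptr_add c0]) simp_all
  have c2: "cm (ptr (PAdd (PComp (H12 dl) H02) (PComp (H12 dl) (H12 dl))))"
    by (rule cm_ptr_add[OF cm2 cm3]) simp_all
  have c3: "cm (ptr (PAdd (PComp H02 H02) (PComp H02 (H12 dl))))"
    by (rule cm_diff[OF c1 c2]) simp
  have c4: "cm (PAdd (ptr (PComp H02 H02)) (ptr (PComp H02 (H12 dl))))"
    by (rule cm_pe[OF ptr_add c3]) simp_all
  have c5: "cm (ptr (PComp H02 H02))" by (rule cm_diff[OF c4 cm1]) simp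
  show ?thesis by (rule cm_pe[OF P4 c5])
qed

lemma ty_Zl2[simp]: "pwf (Zl 2 :: 'k pterm)" "psrc (Zl 2 :: 'k pterm) = 0" "ptgt (Zl 2 :: 'k pterm) = 0"
  by (simp_all add: Zl_def hp2 PPi_def PAmalg_def)

lemma part3: "pwf A \<Longrightarrow> pe dl (PComp (PTens (Zl 2) (bid (ptgt A))) A) (PComp A (PTens (Zl 2) (bid (psrc A))))"
proof (induction A)
  case PId0
  have "pe dl (PComp (PTens (Zl 2) (bid 0)) PId0) (PComp (Zl 2) PId0)"
    by (rule pe_compL, rule ax_tens_unit) simp_all
  also have "pe dl \<dots> (PComp (Zl 2) (idt 0))"
    unfolding idt_def by (rule pe_compR, rule pe_sym, rule ax_tens_unit) simp_all
  also have "pe dl \<dots> (Zl 2)" by (rule ax_id_right) simp_all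
  also have "pe dl \<dots> (PComp (idt 0) (Zl 2))" by (rule pe_sym, rule ax_id_left) simp_all
  also have "pe dl \<dots> (PComp PId0 (Zl 2))"
    unfolding idt_def by (rule pe_compL, rule ax_tens_unit) simp_all
  also have "pe dl \<dots> (PComp PId0 (PTens (Zl 2) (bid 0)))"
    by (rule pe_compR, rule pe_sym, rule ax_tens_unit) simp_all
  finally show ?case by simp
next
  case PH
  then show ?case using part2 by (simp add: cm_def pe_sym)
next
  case (PComp b a)
  have w: "pwf a" "pwf b" "ptgt a = psrc b" using PComp.prems by auto
  have ia: "pe dl (PComp (PTens (Zl 2) (bid (ptgt a))) a) (PComp a (PTens (Zl 2) (bid (psrc a))))" using PComp.IH w by simp
  have ib: "pe dl (PComp (PTens (Zl 2) (bid (ptgt b))) b) (PComp b (PTens (Zl 2) (bid (psrc b))))" using PComp.IH w by simp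
  have "pe dl (PComp (PTens (Zl 2) (bid (ptgt b))) (PComp b a)) (PComp (PComp (PTens (Zl 2) (bid (ptgt b))) b) a)"
    by (rule ax_comp_assoc) (simp_all add: w)
  also have "pe dl \<dots> (PComp (PComp b (PTens (Zl 2) (bid (psrc b)))) a)"
    by (rule pe_compL[OF ib]) (simp_all add: w)
  also have "pe dl \<dots> (PComp b (PComp (PTens (Zl 2) (bid (psrc b))) a))"
    by (rule pe_sym, rule ax_comp_assoc) (simp_all add: w)
  also have "pe dl \<dots> (PComp b (PComp a (PTens (Zl 2) (bid (psrc a)))))"
    by (rule pe_compR) (use ia w in simp_all)
  also have "pe dl \<dots> (PComp (PComp b a) (PTens (Zl 2) (bid (psrc a))))"
    by (rule ax_comp_assoc) (simp_all add: w)
  finally show ?case by simp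
next
  case (PTens t d)
  have w: "pwf t" "is_bdiag d" using PTens.prems by auto
  have it: "pe dl (PComp (PTens (Zl 2) (bid (ptgt t))) t) (PComp t (PTens (Zl 2) (bid (psrc t))))"
    using PTens.IH w by simp
  have "pe dl (PComp (PTens (Zl 2) (bid (ptgt t + bt d))) (PTens t d))
      (PComp (PTens (PTens (Zl 2) (bid (ptgt t))) (bid (bt d))) (PTens t d))"
    by (rule pe_compL, rule pe_sym, rule TT) (simp_all add: w btens_bid)
  also have "pe dl \<dots> (PSmul (dl ^ bloops (bid (bt d)) d) (PTens (PComp (PTens (Zl 2) (bid (ptgt t))) t) d))"
    by (rule ax_interchange) (simp_all add: w bcomp_bid_top)
  also have "pe dl \<dots> (PTens (PComp (PTens (Zl 2) (bid (ptgt t))) t) d)"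
    using w by (simp add: bcomp_bid_top ax_smul_one)
  also have "pe dl \<dots> (PTens (PComp t (PTens (Zl 2) (bid (psrc t)))) d)"
    by (rule pe_tens[OF it w(2)])
  also have "pe dl \<dots> (PSmul (dl ^ bloops d (bid (bs d))) (PTens (PComp t (PTens (Zl 2) (bid (psrc t)))) d))"
    using w by (simp add: bcomp_bid_bot ax_smul_one pe_sym)
  also have "pe dl \<dots> (PComp (PTens t d) (PTens (PTens (Zl 2) (bid (psrc t))) (bid (bs d))))"
    by (rule pe_sym, rule ax_interchange) (simp_all add: w bcomp_bid_bot)
  also have "pe dl \<dots> (PComp (PTens t d) (PTens (Zl 2) (bid (psrc t + bs d))))"
    by (rule pe_compR, rule TT) (simp_all add: w btens_bid)
  finally show ?case by simp
next
  case (PZero r s)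
  have "pe dl (PComp (PTens (Zl 2) (bid s)) (PZero r s)) (PZero r s)"
    using comp_zero_r[of "PTens (Zl 2) (bid s)" s dl r] by simp
  also have "pe dl \<dots> (PComp (PZero r s) (PTens (Zl 2) (bid r)))"
    using comp_zero_l[of "PTens (Zl 2) (bid r)" r dl s] by (simp add: pe_sym)
  finally show ?case by simp
next
  case (PAdd a b)
  have w: "pwf a" "pwf b" "psrc a = psrc b" "ptgt a = ptgt b" using PAdd.prems by auto
  have ia: "pe dl (PComp (PTens (Zl 2) (bid (ptgt a))) a) (PComp a (PTens (Zl 2) (bid (psrc a))))" using PAdd.IH w by simp
  have ib: "pe dl (PComp (PTens (Zl 2) (bid (ptgt a))) b) (PComp b (PTens (Zl 2) (bid (psrc a))))" using PAdd.IH w by simp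
  have "pe dl (PComp (PTens (Zl 2) (bid (ptgt a))) (PAdd a b))
     (PAdd (PComp (PTens (Zl 2) (bid (ptgt a))) a) (PComp (PTens (Zl 2) (bid (ptgt a))) b))"
    by (rule ax_comp_add_r) (simp_all add: w)
  also have "pe dl \<dots> (PAdd (PComp a (PTens (Zl 2) (bid (psrc a)))) (PComp b (PTens (Zl 2) (bid (psrc a)))))"
    by (rule pe_add[OF ia ib]) (simp_all add: w)
  also have "pe dl \<dots> (PComp (PAdd a b) (PTens (Zl 2) (bid (psrc a))))"
    by (rule pe_sym, rule ax_comp_add_l) (simp_all add: w)
  finally show ?case by simp
next
  case (PSmul c a)
  have w: "pwf a" using PSmul.prems by auto
  have ia: "pe dl (PComp (PTens (Zl 2) (bid (ptgt a))) a) (PComp a (PTens (Zl 2) (bid (psrc a))))" using PSmul.IH w by simp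
  have "pe dl (PComp (PTens (Zl 2) (bid (ptgt a))) (PSmul c a)) (PSmul c (PComp (PTens (Zl 2) (bid (ptgt a))) a))"
    by (rule ax_comp_smul_r) (simp_all add: w)
  also have "pe dl \<dots> (PSmul c (PComp a (PTens (Zl 2) (bid (psrc a)))))" by (rule pe_smul[OF ia])
  also have "pe dl \<dots> (PComp (PSmul c a) (PTens (Zl 2) (bid (psrc a))))"
    by (rule pe_sym, rule ax_comp_smul_l) (simp_all add: w)
  finally show ?case by simp
qed

end

theorem lemma2p15:
  fixes delta :: "'k::comm_ring_1"
  shows "((\<exists>u::'k. 2 * u = 1) \<longrightarrow>
            peq delta (Zl 1) (PZero 0 0) \<and>
            peq delta (PSmul 2 (Zl 3)) (PSmul (2 - delta) (Zl 2)))
       \<and> peq delta (PComp (PTens (Zl 2) (bid 1)) PH) (PComp PH (PTens (Zl 2) (bid 1)))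
       \<and> (\<forall>(A::'k pterm) r s. ptyp A r s \<longrightarrow>
            peq delta (PComp (PTens (Zl 2) (bid s)) A) (PComp A (PTens (Zl 2) (bid r))))"
proof (intro conjI impI allI)
  assume u: "\<exists>u::'k. 2 * u = 1"
  show "peq delta (Zl 1) (PZero 0 0)" by (rule pe_peq, rule Z1zero[OF u])
  show "peq delta (PSmul 2 (Zl 3)) (PSmul (2 - delta) (Zl 2))" by (rule pe_peq, rule part1b[OF u])
next
  show "peq delta (PComp (PTens (Zl 2) (bid 1)) PH) (PComp PH (PTens (Zl 2) (bid 1)))"
    using part2[of delta] by (simp add: cm_def pe_peq)
next
  fix A :: "'k pterm" and r s
  assume "ptyp A r s"
  then show "peq delta (PComp (PTens (Zl 2) (bid s)) A) (PComp A (PTens (Zl 2) (bid r)))"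
    using part3[of A delta] by (auto simp: ptyp_def pe_peq)
qed

end
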